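(* Let $Z=(X,Y)\in\Omega_m$ and let $p$ be a hyperbolic singular point of the Filippov vector field $F_{\mathcal P(Z)}$. Then for every transition function $\varphi$ there exist a neighborhood $V$ of $p$ in $S^2_+\cup S^1$ and $\epsilon_0>0$ such that for all $0<\epsilon\le\epsilon_0$ the vector field $\mathcal P(Z)_\epsilon$ has in $V$ a unique singular point, and it is a hyperbolic saddle or a hyperbolic node.
   Context: Fix an integer $m\ge1$. $\chi_m$ is the space of polynomial vector fields $X=P(x,y)\partial_x+Q(x,y)\partial_y$ on $\mathbb R^2$ with $P,Q$ real polynomials of degree $\le m$, identified with their coefficient vectors in $\mathbb R^{(m+1)(m+2)}$; $\deg X=\max\{\deg P,\deg Q\}$. Let $f(x,y)=y$, $D=\{y=0\}$, $N=\{y>0\}$, $S=\{y<0\}$. $\Omega_m$ is the set of pairs $Z=(X,Y)$ with $X,Y\in\chi_m$ of degree exactly $m$, regarded as the discontinuous vector field equal to $X$ on $\{y\ge0\}$ and to $Y$ on $\{y\le0\}$ (bi-valued on $D$). For $X\in\chi_m$ its Poincaré compactification $\mathcal P(X)$ is the unique analytic vector field on $S^2=\{x^2+y^2+z^2=1\}$, tangent to $S^2$, whose restriction to $S^2_+=\{z>0\}$ is $z^{m-1}\wp^*(X)$, where $\wp(u,v)=(u,v,1)/\sqrt{u^2+v^2+1}$; the equator $S^1=\{z=0\}$ is invariant. For $Z=(X,Y)$, $\mathcal P(Z)=(\mathcal P(X),\mathcal P(Y))$ is the discontinuous vector field on the sphere equal to $\mathcal P(X)$ where $y\ge0$ and to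 $\mathcal P(Y)$ where $y\le0$, with $f(x,y,z)=y$, discontinuity set $D=\{y=0\}$, $N=\{y>0\}$, $S=\{y<0\}$. A transition function is a $C^\infty$ function $\varphi:\mathbb R\to\mathbb R$ with $\varphi(t)=0$ for $t\le-1$, $\varphi(t)=1$ for $t\ge1$, and $\varphi'(t)>0$ for $t\in(-1,1)$. The $\varphi_\epsilon$-compactification of $Z$ is the family of $C^\infty$ vector fields on $S^2$: $\mathcal P(Z)_\epsilon(q)=(1-\varphi_\epsilon(f(q)))\mathcal P(Y)(q)+\varphi_\epsilon(f(q))\mathcal P(X)(q)$, with $\varphi_\epsilon(t)=\varphi(t/\epsilon)$. For a discontinuous field $(U,V)$ ($U$ on $y\ge0$, $V$ on $y\le0$) write $Uf=\langle\nabla f,U\rangle$. On $D$: escaping arc $ES$ where $Uf>0,Vf<0$; sliding arc $SL$ where $Uf<0,Vf>0$. On $SL\cup ES$ the Filippov vector field $F$ at $p$ is the vector in the cone spanned by $U(p),V(p)$ tangent to $D$. A point $p\in D$ is a singular point of $F$ if $Uf(p)Vf(p)<0$ and $\det[U,V](p)=0$ (determinant of the matrix with rows $U(p),V(p)$); it is hyperbolic if moreover the derivative of $\det[U,V]|_D$ at $p$ is nonzero. Here $(U,V)=\mathcal P(Z)$ and $F=F_{\mathcal P(Z)}$. *)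

theory Defs
  imports "HOL-Analysis.Analysis"
begin

text \<open>A real polynomial in two variables is represented by its coefficient function
  c, with c i j the coefficient of x^i y^j.  A polynomial vector field
  X = P d/dx + Q d/dy is the pair (cP, cQ) of coefficient functions.\<close>

type_synonym pcoeffs = "nat \<Rightarrow> nat \<Rightarrow> real"
type_synonym pfield = "pcoeffs \<times> pcoeffs"

definition poly_deg_le :: "nat \<Rightarrow> pcoeffs \<Rightarrow> bool" where
  "poly_deg_le m c \<longleftrightarrow> (\<forall>i j. m < i + j \<longrightarrow> c i j = 0)"

definition in_chi :: "nat \<Rightarrow> pfield \<Rightarrow> bool" where
  "in_chi m X \<longleftrightarrow> poly_deg_le m (fst X) \<and> poly_deg_le m (snd X)"

definition deg_exactly :: "nat \<Rightarrow> pfield \<Rightarrow> bool" where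
  "deg_exactly m X \<longleftrightarrow> in_chi m X \<and>
     (\<exists>i j. i + j = m \<and> (fst X i j \<noteq> 0 \<or> snd X i j \<noteq> 0))"

definition Omega :: "nat \<Rightarrow> (pfield \<times> pfield) set" where
  "Omega m = {(X, Y). deg_exactly m X \<and> deg_exactly m Y}"

text \<open>Evaluation of a polynomial and its degree-m homogenisation
  z^m P(x/z, y/z) = sum c_ij x^i y^j z^(m-i-j).\<close>
definition peval :: "nat \<Rightarrow> pcoeffs \<Rightarrow> real \<Rightarrow> real \<Rightarrow> real" where
  "peval m c x y = (\<Sum>(i, j) \<in> {(i, j). i + j \<le> m}. c i j * x ^ i * y ^ j)"

definition phom :: "nat \<Rightarrow> pcoeffs \<Rightarrow> real ^ 3 \<Rightarrow> real" where
  "phom m c q = (\<Sum>(i, j) \<in> {(i, j). i + j \<le> m}.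
                   c i j * (q $ 1) ^ i * (q $ 2) ^ j * (q $ 3) ^ (m - i - j))"

lemma phom_peval:
  assumes "q $ 3 \<noteq> 0"
  shows "phom m c q = (q $ 3) ^ m * peval m c (q $ 1 / q $ 3) (q $ 2 / q $ 3)"
  unfolding phom_def peval_def sum_distrib_left
proof (rule sum.cong[OF refl], clarify)
  fix i j assume ij: "i + j \<le> m"
  have "(q $ 3) ^ m = (q $ 3) ^ i * (q $ 3) ^ j * (q $ 3) ^ (m - i - j)"
    using ij by (simp flip: power_add)
  then show "c i j * (q $ 1) ^ i * (q $ 2) ^ j * (q $ 3) ^ (m - i - j) =
    (q $ 3) ^ m * (c i j * (q $ 1 / q $ 3) ^ i * (q $ 2 / q $ 3) ^ j)"
    using assms by (simp add: field_simps)
qed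

definition sphere2 :: "(real ^ 3) set" where
  "sphere2 = {q. norm q = 1}"

definition upper_hemi :: "(real ^ 3) set" where
  "upper_hemi = {q \<in> sphere2. q $ 3 \<ge> 0}"

definition wp :: "real \<times> real \<Rightarrow> real ^ 3" where
  "wp uv = (1 / sqrt ((fst uv)\<^sup>2 + (snd uv)\<^sup>2 + 1)) *\<^sub>R vector [fst uv, snd uv, 1]"

text \<open>On S^2_+ this is z^(m-1) times the push-forward of X by wp (indeed
  D wp(u,v) h = z (h - <q,h> q) with q = wp(u,v), z = 1/sqrt(u^2+v^2+1)), and it is
  analytic on all of S^2, hence it is the unique analytic extension of the paper.
  Outside S^2 the formula provides a smooth (polynomial) extension to R^3, which is
  only used to speak of derivatives.\<close>
definition pcomp :: "nat \<Rightarrow> pfield \<Rightarrow> real ^ 3 \<Rightarrow> real ^ 3" where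
  "pcomp m X q =
     (let H = vector [phom m (fst X) q, phom m (snd X) q, 0] :: real ^ 3
      in H - (q \<bullet> H) *\<^sub>R q)"

text \<open>U f = <grad f, U> for f = y\<close>
definition Lie_f :: "(real ^ 3 \<Rightarrow> real ^ 3) \<Rightarrow> real ^ 3 \<Rightarrow> real" where
  "Lie_f U q = U q $ 2"

text \<open>det[U,V] on the sphere: the determinant of U(q), V(q) in the oriented tangent
  plane T_q S^2, i.e. the 3x3 determinant with rows U(q), V(q), q.\<close>
definition detUV :: "(real ^ 3 \<Rightarrow> real ^ 3) \<Rightarrow> (real ^ 3 \<Rightarrow> real ^ 3) \<Rightarrow> real ^ 3 \<Rightarrow> real" where
  "detUV U V q = det (vector [U q, V q, q] :: real ^ 3 ^ 3)"

definition Dcurve :: "real \<Rightarrow> real ^ 3" where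
  "Dcurve \<theta> = vector [cos \<theta>, 0, sin \<theta>]"

definition filippov_singular :: "(real ^ 3 \<Rightarrow> real ^ 3) \<Rightarrow> (real ^ 3 \<Rightarrow> real ^ 3) \<Rightarrow> real ^ 3 \<Rightarrow> bool" where
  "filippov_singular U V p \<longleftrightarrow>
     p \<in> sphere2 \<and> p $ 2 = 0 \<and> Lie_f U p * Lie_f V p < 0 \<and> detUV U V p = 0"

definition filippov_hyperbolic_singular ::
  "(real ^ 3 \<Rightarrow> real ^ 3) \<Rightarrow> (real ^ 3 \<Rightarrow> real ^ 3) \<Rightarrow> real ^ 3 \<Rightarrow> bool" where
  "filippov_hyperbolic_singular U V p \<longleftrightarrow>
     filippov_singular U V p \<and>
     (\<exists>\<theta>0 d. p = Dcurve \<theta>0 \<and> ((\<lambda>\<theta>. detUV U V (Dcurve \<theta>)) has_real_derivative d) (at \<theta>0)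
            \<and> d \<noteq> 0)"

definition transition_function :: "(real \<Rightarrow> real) \<Rightarrow> bool" where
  "transition_function \<phi> \<longleftrightarrow>
     (\<forall>n x. ((deriv ^^ n) \<phi>) differentiable (at x)) \<and>
     (\<forall>t \<le> -1. \<phi> t = 0) \<and> (\<forall>t \<ge> 1. \<phi> t = 1) \<and>
     (\<forall>t. -1 < t \<and> t < 1 \<longrightarrow> deriv \<phi> t > 0)"

definition reg_comp :: "nat \<Rightarrow> (real \<Rightarrow> real) \<Rightarrow> real \<Rightarrow> pfield \<times> pfield \<Rightarrow> real ^ 3 \<Rightarrow> real ^ 3" where
  "reg_comp m \<phi> \<epsilon> Z q =
     (1 - \<phi> (q $ 2 / \<epsilon>)) *\<^sub>R pcomp m (snd Z) q + \<phi> (q $ 2 / \<epsilon>) *\<^sub>R pcomp m (fst Z) q"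

text \<open>Trace and determinant do not depend on the choice of the basis.\<close>
definition tangent_linearization ::
  "(real ^ 3 \<Rightarrow> real ^ 3) \<Rightarrow> real ^ 3 \<Rightarrow> real ^ 3 \<Rightarrow> real ^ 3 \<Rightarrow> real \<times> real \<Rightarrow> bool" where
  "tangent_linearization W q e1 e2 td \<longleftrightarrow>
     (\<exists>L. (W has_derivative L) (at q) \<and>
        norm e1 = 1 \<and> norm e2 = 1 \<and> e1 \<bullet> e2 = 0 \<and> e1 \<bullet> q = 0 \<and> e2 \<bullet> q = 0 \<and>
        td = (e1 \<bullet> L e1 + e2 \<bullet> L e2,
              (e1 \<bullet> L e1) * (e2 \<bullet> L e2) - (e1 \<bullet> L e2) * (e2 \<bullet> L e1)))"

definition sing_point_S2 :: "(real ^ 3 \<Rightarrow> real ^ 3) \<Rightarrow> real ^ 3 \<Rightarrow> bool" where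
  "sing_point_S2 W q \<longleftrightarrow> q \<in> sphere2 \<and> W q = 0"

text \<open>hyperbolic saddle: real eigenvalues of opposite signs (det < 0)\<close>
definition hyperbolic_saddle :: "(real ^ 3 \<Rightarrow> real ^ 3) \<Rightarrow> real ^ 3 \<Rightarrow> bool" where
  "hyperbolic_saddle W q \<longleftrightarrow> sing_point_S2 W q \<and>
     (\<exists>e1 e2 tr dt. tangent_linearization W q e1 e2 (tr, dt) \<and> dt < 0)"

text \<open>hyperbolic node: real nonzero eigenvalues of the same sign (det > 0, tr^2 \<ge> 4 det)\<close>
definition hyperbolic_node :: "(real ^ 3 \<Rightarrow> real ^ 3) \<Rightarrow> real ^ 3 \<Rightarrow> bool" where
  "hyperbolic_node W q \<longleftrightarrow> sing_point_S2 W q \<and>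
     (\<exists>e1 e2 tr dt. tangent_linearization W q e1 e2 (tr, dt) \<and> dt > 0 \<and> tr\<^sup>2 \<ge> 4 * dt)"

end

theory Submission
  imports Defs
begin

definition tp :: "real^3 \<Rightarrow> real^3 \<Rightarrow> real^3 \<Rightarrow> real" where
 "tp a b c = det (vector [a,b,c] :: real^3^3)"

lemma tp_expand: "tp a b c = a$1*(b$2*c$3 - b$3*c$2) - a$2*(b$1*c$3 - b$3*c$1) + a$3*(b$1*c$2 - b$2*c$1)"
  unfolding tp_def det_3 by (simp add: algebra_simps)

lemma inner3: "(x::real^3) \<bullet> y = x$1*y$1 + x$2*y$2 + x$3*y$3"
  by (simp add: inner_vec_def sum_3)

lemma vec3_eq: "(x::real^3) = y \<longleftrightarrow> x$1=y$1 \<and> x$2=y$2 \<and> x$3=y$3"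
  by (simp add: vec_eq_iff forall_3)

lemma has_derivative_nth[derivative_intros]:
  "(f has_derivative f') F \<Longrightarrow> ((\<lambda>x. f x $ i) has_derivative (\<lambda>h. f' h $ i)) F"
  by (rule bounded_linear.has_derivative[OF bounded_linear_vec_nth])

lemma vector3_axis: "(vector [a,b,c] :: real^3) = a *\<^sub>R axis 1 1 + b *\<^sub>R axis 2 1 + c *\<^sub>R axis 3 1"
  by (simp add: vec3_eq axis_def)

lemma has_derivative_vector3[derivative_intros]:
  assumes "(f has_derivative f') F" "(g has_derivative g') F" "(k has_derivative k') F"
  shows "((\<lambda>x. vector [f x, g x, k x] :: real^3) has_derivative (\<lambda>h. vector [f' h, g' h, k' h])) F"
  unfolding vector3_axis
  by (rule has_derivative_eq_rhs, (rule derivative_intros assms)+) (simp add: vec3_eq axis_def)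

definition dphom :: "nat \<Rightarrow> pcoeffs \<Rightarrow> real ^ 3 \<Rightarrow> real ^ 3 \<Rightarrow> real" where
  "dphom m c q h = (\<Sum>(i, j) \<in> {(i, j). i + j \<le> m}.
      c i j * (real i * (q$1)^(i-1) * h$1 * (q$2)^j * (q$3)^(m-i-j)
             + (q$1)^i * (real j * (q$2)^(j-1) * h$2) * (q$3)^(m-i-j)
             + (q$1)^i * (q$2)^j * (real (m-i-j) * (q$3)^(m-i-j-1) * h$3)))"

lemma finite_idx: "finite {(i, j). i + j \<le> (m::nat)}"
  by (rule finite_subset[of _ "{..m}\<times>{..m}"]) auto

lemma mono_deriv: "((\<lambda>q::real^3. c * (q$1)^i * (q$2)^j * (q$3)^k) has_derivative
   (\<lambda>h. c * (real i * (q$1)^(i-1) * h$1 * (q$2)^j * (q$3)^k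
             + (q$1)^i * (real j * (q$2)^(j-1) * h$2) * (q$3)^k
             + (q$1)^i * (q$2)^j * (real k * (q$3)^(k-1) * h$3)))) (at q)"
  by (rule has_derivative_eq_rhs, (rule derivative_intros)+) (auto simp: algebra_simps)

lemma phom_deriv: "(phom m c has_derivative dphom m c q) (at q)"
  unfolding phom_def dphom_def
proof (rule has_derivative_sum)
  fix ij :: "nat \<times> nat"
  obtain i j where "ij = (i,j)" by fastforce
  then show "((\<lambda>x. case ij of (i, j) \<Rightarrow> c i j * x $ 1 ^ i * x $ 2 ^ j * x $ 3 ^ (m - i - j)) has_derivative
          (\<lambda>h. case ij of (i, j) \<Rightarrow> c i j * (real i * (q$1)^(i-1) * h$1 * (q$2)^j * (q$3)^(m-i-j)
             + (q$1)^i * (real j * (q$2)^(j-1) * h$2) * (q$3)^(m-i-j)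
             + (q$1)^i * (q$2)^j * (real (m-i-j) * (q$3)^(m-i-j-1) * h$3)))) (at q)"
    by (simp only: prod.case mono_deriv)
qed


definition Hf :: "nat \<Rightarrow> pfield \<Rightarrow> real^3 \<Rightarrow> real^3" where
  "Hf m X q = vector [phom m (fst X) q, phom m (snd X) q, 0]"
definition dH :: "nat \<Rightarrow> pfield \<Rightarrow> real^3 \<Rightarrow> real^3 \<Rightarrow> real^3" where
  "dH m X q h = vector [dphom m (fst X) q h, dphom m (snd X) q h, 0]"
definition dpcomp :: "nat \<Rightarrow> pfield \<Rightarrow> real^3 \<Rightarrow> real^3 \<Rightarrow> real^3" where
  "dpcomp m X q h = dH m X q h - (h \<bullet> Hf m X q + q \<bullet> dH m X q h) *\<^sub>R q - (q \<bullet> Hf m X q) *\<^sub>R h"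

lemma pcomp_Hf: "pcomp m X q = Hf m X q - (q \<bullet> Hf m X q) *\<^sub>R q"
  by (simp add: pcomp_def Hf_def Let_def)

lemma Hf_deriv: "(Hf m X has_derivative dH m X q) (at q)"
  unfolding Hf_def dH_def
  by (intro has_derivative_vector3 phom_deriv has_derivative_const)

lemma pcomp_deriv: "(pcomp m X has_derivative dpcomp m X q) (at q)"
  unfolding pcomp_Hf[abs_def] dpcomp_def
  by (rule has_derivative_eq_rhs, (rule derivative_intros Hf_deriv)+) (auto simp: algebra_simps inner_commute)

lemma dphom_cont: "continuous_on UNIV (\<lambda>z. dphom m c (fst z) (snd z))"
  unfolding dphom_def split_def
  by (intro continuous_intros)

lemma dpcomp_cont: "continuous_on UNIV (\<lambda>z. dpcomp m X (fst z) (snd z))"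
  unfolding dpcomp_def dH_def Hf_def vector3_axis phom_def dphom_def split_def
  by (intro continuous_intros)

lemma pcomp_tangent: "norm q = 1 \<Longrightarrow> q \<bullet> pcomp m X q = 0"
  unfolding pcomp_Hf by (simp add: inner_diff_right norm_eq_sqrt_inner)

lemma pcomp_equator: "q$3 = 0 \<Longrightarrow> pcomp m X q $ 3 = 0"
  unfolding pcomp_Hf Hf_def by simp

lemma tp_lin1: "tp (a *\<^sub>R x + b *\<^sub>R y) z w = a * tp x z w + b * tp y z w"
  by (simp add: tp_expand algebra_simps)
lemma tp_same: "tp x x w = 0"
  by (simp add: tp_expand algebra_simps)

lemma zero_lemma:
  fixes Z V q :: "real^3"
  assumes "q \<bullet> q = 1" "q$1^2 + q$3^2 > 0" "Z \<bullet> q = 0" "V \<bullet> q = 0" "Z$2 = 0" "V$2 \<noteq> 0" "tp Z V q = 0"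
  shows "Z = 0"
proof -
  have e1: "Z$1*q$1 + Z$3*q$3 = 0" using assms(3,5) by (simp add: inner3)
  have e2: "V$1*q$1 + V$2*q$2 + V$3*q$3 = 0" using assms(4) by (simp add: inner3)
  have e3: "q$1^2+q$2^2+q$3^2 = 1" using assms(1) by (simp add: inner3 power2_eq_square)
  have e4: "Z$1*(V$2*q$3 - V$3*q$2) + Z$3*(V$1*q$2 - V$2*q$1) = 0" using assms(7,5) by (simp add: tp_expand)
  have "V$2 * (Z$1*q$3 - Z$3*q$1) = 0"
  proof -
    have "V$2 * (Z$1*q$3 - Z$3*q$1) * (q$1^2+q$3^2) = 0"
      using e1 e2 e3 e4 by algebra
    then show ?thesis using assms(2) by (metis mult_eq_0_iff order_less_irrefl)
  qed
  then have e5: "Z$1*q$3 - Z$3*q$1 = 0" using assms(6) by simp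
  have "Z$1 * (q$1^2+q$3^2) = 0" "Z$3 * (q$1^2+q$3^2) = 0" using e1 e5 by algebra+
  then have "Z$1 = 0" "Z$3 = 0" using assms(2) by (metis mult_eq_0_iff order_less_irrefl)+
  then show ?thesis using assms(5) by (simp add: vec3_eq)
qed

lemma d_identity:
  fixes U V a b e p :: "real^3" and t :: real
  assumes "t *\<^sub>R U + (1-t) *\<^sub>R V = 0" "t \<noteq> 0"
  shows "tp a V p + tp U b p + tp U V e = tp (U - V) (t *\<^sub>R a + (1-t) *\<^sub>R b) p"
proof -
  have c: "t*U$1 + (1-t)*V$1 = 0" "t*U$2 + (1-t)*V$2 = 0" "t*U$3 + (1-t)*V$3 = 0"
    using assms(1) by (simp_all add: vec3_eq)
  have "t * (tp a V p + tp U b p + tp U V e) = t * tp (U - V) (t *\<^sub>R a + (1-t) *\<^sub>R b) p"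
    unfolding tp_expand using c by simp algebra
  then show ?thesis using assms(2) by simp
qed

lemma K_identity:
  fixes w x p :: "real^3"
  assumes "p$2 = 0"
  shows "tp w x p = (vector [-p$3,0,p$1] \<bullet> x) * w$2 - (vector [-p$3,0,p$1] \<bullet> w) * x$2"
  using assms by (simp add: tp_expand inner3 algebra_simps)

lemma cont_at_eps:
  fixes f :: "'a::metric_space \<Rightarrow> real"
  assumes "continuous (at x0) f" "e > 0"
  shows "\<exists>r>0. \<forall>x. dist x x0 < r \<longrightarrow> \<bar>f x - f x0\<bar> < e"
  using assms unfolding continuous_at_eps_delta dist_real_def by blast

lemma dist_pair_lt:
  assumes "dist a c < r/2" "dist b d < r/2"
  shows "dist (a,b) (c,d) < r"
proof -
  have "dist (a,b) (c,d) \<le> dist a c + dist b d"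
    unfolding dist_Pair_Pair by (rule sqrt_sum_squares_le_sum) auto
  then show ?thesis using assms by linarith
qed

lemma deriv_lip:
  fixes f f' :: "real \<Rightarrow> real"
  assumes d: "\<And>x. lo \<le> x \<Longrightarrow> x \<le> hi \<Longrightarrow> (f has_real_derivative f' x) (at x)"
    and b: "\<And>x. lo \<le> x \<Longrightarrow> x \<le> hi \<Longrightarrow> \<bar>f' x\<bar> \<le> B"
    and x: "lo \<le> x1" "x1 \<le> hi" "lo \<le> x2" "x2 \<le> hi"
  shows "\<bar>f x1 - f x2\<bar> \<le> B * \<bar>x1 - x2\<bar>"
proof -
  have *: "\<bar>f y - f x\<bar> \<le> B * \<bar>y - x\<bar>" if "lo \<le> x" "x < y" "y \<le> hi" for x y
  proof -
    have "\<exists>z>x. z < y \<and> f y - f x = (y - x) * f' z"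
      by (rule MVT2[OF \<open>x < y\<close>]) (use d that in auto)
    then obtain z where z: "x < z" "z < y" "f y - f x = (y - x) * f' z" by blast
    have "\<bar>f' z\<bar> \<le> B" using b z that by auto
    then have "\<bar>(y - x) * f' z\<bar> \<le> \<bar>y - x\<bar> * B" by (simp add: abs_mult mult_left_mono)
    then show ?thesis using z by (simp add: mult.commute)
  qed
  consider "x1 = x2" | "x1 < x2" | "x2 < x1" by linarith
  then show ?thesis
  proof cases
    case 1 then show ?thesis by simp
  next
    case 2 then show ?thesis using *[of x1 x2] x by (simp add: abs_minus_commute)
  next
    case 3 then show ?thesis using *[of x2 x1] x by simp
  qed
qed

lemma deriv_lower:
  fixes f f' :: "real \<Rightarrow> real"
  assumes d: "\<And>x. lo \<le> x \<Longrightarrow> x \<le> hi \<Longrightarrow> (f has_real_derivative f' x) (at x)"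
    and b: "\<And>x. lo \<le> x \<Longrightarrow> x \<le> hi \<Longrightarrow> f' x \<ge> c"
    and x: "lo \<le> x1" "x1 \<le> x2" "x2 \<le> hi"
  shows "f x2 - f x1 \<ge> c * (x2 - x1)"
proof (cases "x1 = x2")
  case True then show ?thesis by simp
next
  case False
  then have "x1 < x2" using x by simp
  have "\<exists>z>x1. z < x2 \<and> f x2 - f x1 = (x2 - x1) * f' z"
    by (rule MVT2[OF \<open>x1 < x2\<close>]) (use d x in auto)
  then obtain z where z: "x1 < z" "z < x2" "f x2 - f x1 = (x2 - x1) * f' z" by blast
  have "f' z \<ge> c" using b z x by auto
  then show ?thesis using z \<open>x1 < x2\<close> by (simp add: mult.commute mult_right_mono)
qed

lemma norm3: "norm (x::real^3) = sqrt (x$1^2 + x$2^2 + x$3^2)"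
  by (simp add: norm_eq_sqrt_inner inner3 power2_eq_square)

locale twofield =
  fixes U V :: "real^3 \<Rightarrow> real^3" and DU DV :: "real^3 \<Rightarrow> real^3 \<Rightarrow> real^3"
  assumes dU: "\<And>q. (U has_derivative DU q) (at q)"
    and dV: "\<And>q. (V has_derivative DV q) (at q)"
    and cU: "continuous_on UNIV (\<lambda>z. DU (fst z) (snd z))"
    and cV: "continuous_on UNIV (\<lambda>z. DV (fst z) (snd z))"
    and tU: "\<And>q. q \<in> sphere2 \<Longrightarrow> q \<bullet> U q = 0"
    and tV: "\<And>q. q \<in> sphere2 \<Longrightarrow> q \<bullet> V q = 0"
    and eU: "\<And>q. q$3 = 0 \<Longrightarrow> U q $ 3 = 0"
    and eV: "\<And>q. q$3 = 0 \<Longrightarrow> V q $ 3 = 0"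
begin

definition "D q = tp (U q) (V q) q"
definition "DD q h = tp (DU q h) (V q) q + tp (U q) (DV q h) q + tp (U q) (V q) h"

lemma U_cont: "continuous_on UNIV U"
  by (meson continuous_at_imp_continuous_on dU has_derivative_continuous)
lemma V_cont: "continuous_on UNIV V"
  by (meson continuous_at_imp_continuous_on dV has_derivative_continuous)

lemma Un_deriv: "((\<lambda>q. U q $ i) has_derivative (\<lambda>h. DU q h $ i)) (at q)"
  by (rule has_derivative_nth[OF dU])
lemma Vn_deriv: "((\<lambda>q. V q $ i) has_derivative (\<lambda>h. DV q h $ i)) (at q)"
  by (rule has_derivative_nth[OF dV])
lemma idn_deriv: "((\<lambda>q::real^3. q $ i) has_derivative (\<lambda>h. h $ i)) (at q)"
  by (rule has_derivative_nth[OF has_derivative_ident])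

lemma D_deriv: "(D has_derivative DD q) (at q)"
  unfolding D_def[abs_def] DD_def tp_expand
  apply (rule has_derivative_eq_rhs)
  apply (rule Un_deriv Vn_deriv idn_deriv derivative_eq_intros(1-30) refl)+
  apply (simp add: algebra_simps)
  done

lemma cUn: "continuous_on UNIV (\<lambda>z. DU (fst z) (snd z) $ i)"
  by (intro continuous_on_component cU)
lemma cVn: "continuous_on UNIV (\<lambda>z. DV (fst z) (snd z) $ i)"
  by (intro continuous_on_component cV)
lemma cUf: "continuous_on UNIV (\<lambda>z. U (fst z) $ i)"
  by (intro continuous_on_component continuous_on_compose2[OF U_cont] continuous_intros) auto
lemma cVf: "continuous_on UNIV (\<lambda>z. V (fst z) $ i)"
  by (intro continuous_on_component continuous_on_compose2[OF V_cont] continuous_intros) auto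

lemma DD_cont: "continuous_on UNIV (\<lambda>z. DD (fst z) (snd z))"
  unfolding DD_def tp_expand
  by (intro continuous_on_add continuous_on_diff continuous_on_mult cUn cVn cUf cVf
     continuous_on_component continuous_on_fst continuous_on_snd continuous_on_id)

end


locale atp = twofield +
  fixes p :: "real^3"
  assumes pp: "p \<bullet> p = 1" and p2: "p$2 = 0"
begin

definition "E = (vector [-p$3, 0, p$1] :: real^3)"
definition "ey = (vector [0, 1, 0] :: real^3)"
definition "nn u y = sqrt (1 - u^2 - y^2)"
definition "cc u y = nn u y *\<^sub>R p + u *\<^sub>R E + y *\<^sub>R ey"
definition "cu u y = (-(u / nn u y)) *\<^sub>R p + E"
definition "cyv u y = (-(y / nn u y)) *\<^sub>R p + ey"

lemma p13: "p$1^2 + p$3^2 = 1"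
  using pp p2 by (simp add: inner3 power2_eq_square)

lemma cc_comp: "cc u y $ 1 = nn u y * p$1 - u * p$3" "cc u y $ 2 = y" "cc u y $ 3 = nn u y * p$3 + u * p$1"
  by (simp_all add: cc_def E_def ey_def p2)

lemma cc_E: "cc u y \<bullet> E = u"
proof -
  have "cc u y \<bullet> E = u * (p$1^2 + p$3^2)"
    by (simp add: inner3 cc_comp E_def algebra_simps power2_eq_square)
  then show ?thesis using p13 by simp
qed

lemma cc_p: "cc u y \<bullet> p = nn u y"
proof -
  have "cc u y \<bullet> p = nn u y * (p$1^2 + p$3^2)"
    by (simp add: inner3 cc_comp p2 algebra_simps power2_eq_square)
  then show ?thesis using p13 by simp
qed

lemma nn_sq: "u^2 + y^2 \<le> 1 \<Longrightarrow> (nn u y)^2 = 1 - u^2 - y^2"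
  by (simp add: nn_def)

lemma cc_sphere: assumes "u^2 + y^2 \<le> 1" shows "cc u y \<bullet> cc u y = 1"
proof -
  have "cc u y \<bullet> cc u y = (nn u y)^2 * (p$1^2 + p$3^2) + u^2 * (p$1^2 + p$3^2) + y^2"
    by (simp add: inner3 cc_comp algebra_simps power2_eq_square)
  then show ?thesis using p13 nn_sq[OF assms] by simp
qed

lemma nn_ge: "u^2 + y^2 \<le> 1/2 \<Longrightarrow> nn u y \<ge> 1/2"
  unfolding nn_def by (rule real_le_rsqrt) (simp add: power2_eq_square)

lemma nn_le: "nn u y \<le> 1"
  unfolding nn_def by (simp add: real_sqrt_le_1_iff add_nonneg_nonneg)

lemma normE: "norm E = 1" and normey: "norm ey = 1" and normp: "norm p = 1"
  using p13 pp p2 by (simp_all add: norm3 E_def ey_def norm_eq_sqrt_inner)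

lemma cc_decomp:
  assumes "q \<bullet> q = 1" "q \<bullet> p > 0"
  shows "q = cc (q \<bullet> E) (q$2)" "(q \<bullet> E)^2 + (q$2)^2 < 1"
proof -
  have q1: "q$1^2 + q$2^2 + q$3^2 = 1" using assms(1) by (simp add: inner3 power2_eq_square)
  have qp: "q \<bullet> p = q$1*p$1 + q$3*p$3" by (simp add: inner3 p2)
  have qE: "q \<bullet> E = -q$1*p$3 + q$3*p$1" by (simp add: inner3 E_def)
  have id: "(q \<bullet> p)^2 + (q \<bullet> E)^2 + (q$2)^2 = 1"
  proof -
    have "(q \<bullet> p)^2 + (q \<bullet> E)^2 + (q$2)^2 = (q$1^2 + q$3^2)*(p$1^2+p$3^2) + q$2^2"
      unfolding qp qE by (simp add: algebra_simps power2_eq_square)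
    then show ?thesis using p13 q1 by simp
  qed
  then show "(q \<bullet> E)^2 + (q$2)^2 < 1" using assms(2) by (smt (verit) zero_less_power)
  have n: "nn (q \<bullet> E) (q$2) = q \<bullet> p"
    unfolding nn_def using id assms(2) by (simp add: real_sqrt_unique algebra_simps)
  have a1: "q$1 = (q$1*p$1 + q$3*p$3) * p$1 - (-q$1*p$3 + q$3*p$1) * p$3"
    using p13 by algebra
  have a3: "q$3 = (q$1*p$1 + q$3*p$3) * p$3 + (-q$1*p$3 + q$3*p$1) * p$1"
    using p13 by algebra
  have b1: "q$1 = (q \<bullet> p) * p$1 - (q \<bullet> E) * p$3" using a1 qp qE by simp
  have b3: "q$3 = (q \<bullet> p) * p$3 + (q \<bullet> E) * p$1" using a3 qp qE by simp
  show "q = cc (q \<bullet> E) (q$2)"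
    unfolding vec3_eq cc_comp n using b1 b3 by simp
qed

lemma cc_dist:
  assumes "u^2 + y^2 \<le> 1" "\<bar>u\<bar> \<le> 1" "\<bar>y\<bar> \<le> 1"
  shows "norm (cc u y - p) \<le> 2 * (\<bar>u\<bar> + \<bar>y\<bar>)"
proof -
  have "cc u y - p = (nn u y - 1) *\<^sub>R p + u *\<^sub>R E + y *\<^sub>R ey"
    by (simp add: cc_def algebra_simps)
  then have "norm (cc u y - p) \<le> \<bar>nn u y - 1\<bar> + \<bar>u\<bar> + \<bar>y\<bar>"
    using norm_triangle_ineq[of "(nn u y - 1) *\<^sub>R p + u *\<^sub>R E" "y *\<^sub>R ey"]
      norm_triangle_ineq[of "(nn u y - 1) *\<^sub>R p" "u *\<^sub>R E"]
    by (simp add: normE normey normp)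
  moreover have "\<bar>nn u y - 1\<bar> \<le> u^2 + y^2"
  proof -
    have "0 \<le> nn u y" "nn u y \<le> 1" using nn_le assms(1) by (auto simp: nn_def)
    then have "1 - nn u y \<le> 1 - (nn u y)^2" by (simp add: power2_eq_square mult_left_le_one_le)
    then show ?thesis using nn_sq[OF assms(1)] \<open>nn u y \<le> 1\<close> by simp
  qed
  moreover have "u^2 \<le> \<bar>u\<bar>" "y^2 \<le> \<bar>y\<bar>"
    using assms(2,3) mult_left_le_one_le[of "\<bar>u\<bar>" "\<bar>u\<bar>"] mult_left_le_one_le[of "\<bar>y\<bar>" "\<bar>y\<bar>"]
    by (simp_all add: power2_eq_square abs_mult_self_eq)
  ultimately show ?thesis by (smt (verit))
qed

lemma cu_dist: assumes "u^2 + y^2 \<le> 1/2" shows "norm (cu u y - E) \<le> 2 * \<bar>u\<bar>"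
proof -
  have n: "nn u y \<ge> 1/2" by (rule nn_ge[OF assms])
  have "norm (cu u y - E) = \<bar>u\<bar> / nn u y" using n by (simp add: cu_def normp abs_div)
  also have "\<dots> \<le> \<bar>u\<bar> / (1/2)" by (rule divide_left_mono) (use n in auto)
  finally show ?thesis by simp
qed

lemma cyv_dist: assumes "u^2 + y^2 \<le> 1/2" shows "norm (cyv u y - ey) \<le> 2 * \<bar>y\<bar>"
proof -
  have n: "nn u y \<ge> 1/2" by (rule nn_ge[OF assms])
  have "norm (cyv u y - ey) = \<bar>y\<bar> / nn u y" using n by (simp add: cyv_def normp abs_div)
  also have "\<dots> \<le> \<bar>y\<bar> / (1/2)" by (rule divide_left_mono) (use n in auto)
  finally show ?thesis by simp
qed

lemma cc_du: assumes "u^2 + y^2 < 1"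
  shows "((\<lambda>u. cc u y) has_derivative (\<lambda>s. s *\<^sub>R cu u y)) (at u)"
proof -
  have pos: "1 - u^2 - y^2 > 0" using assms by simp
  have "((\<lambda>u. 1 - u^2 - y^2) has_real_derivative (-2*u)) (at u)"
    by (auto intro!: derivative_eq_intros)
  from DERIV_chain2[OF DERIV_real_sqrt[OF pos] this]
  have "((\<lambda>u. nn u y) has_real_derivative (-(u / nn u y))) (at u)"
    unfolding nn_def by (simp add: field_simps)
  then have a: "((\<lambda>u. nn u y *\<^sub>R p) has_vector_derivative (-(u / nn u y)) *\<^sub>R p) (at u)"
    unfolding has_real_derivative_iff_has_vector_derivative
    by (rule bounded_linear.has_vector_derivative[OF bounded_linear_scaleR_left])
  have b: "((\<lambda>u. u *\<^sub>R E) has_vector_derivative E) (at u)"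
    using bounded_linear.has_vector_derivative[OF bounded_linear_scaleR_left has_vector_derivative_id]
    by simp
  have c: "((\<lambda>u. y *\<^sub>R ey) has_vector_derivative 0) (at u)"
    by simp
  have "((\<lambda>u. cc u y) has_vector_derivative cu u y) (at u)"
    unfolding cc_def cu_def using has_vector_derivative_add[OF has_vector_derivative_add[OF a b] c] by simp
  then show ?thesis by (simp add: has_vector_derivative_def)
qed

lemma cc_dy: assumes "u^2 + y^2 < 1"
  shows "((\<lambda>y. cc u y) has_derivative (\<lambda>s. s *\<^sub>R cyv u y)) (at y)"
proof -
  have pos: "1 - u^2 - y^2 > 0" using assms by simp
  have "((\<lambda>y. 1 - u^2 - y^2) has_real_derivative (-2*y)) (at y)"
    by (auto intro!: derivative_eq_intros)
  from DERIV_chain2[OF DERIV_real_sqrt[OF pos] this]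
  have "((\<lambda>y. nn u y) has_real_derivative (-(y / nn u y))) (at y)"
    unfolding nn_def by (simp add: field_simps)
  then have a: "((\<lambda>y. nn u y *\<^sub>R p) has_vector_derivative (-(y / nn u y)) *\<^sub>R p) (at y)"
    unfolding has_real_derivative_iff_has_vector_derivative
    by (rule bounded_linear.has_vector_derivative[OF bounded_linear_scaleR_left])
  have b: "((\<lambda>y. y *\<^sub>R ey) has_vector_derivative ey) (at y)"
    using bounded_linear.has_vector_derivative[OF bounded_linear_scaleR_left has_vector_derivative_id]
    by simp
  have c: "((\<lambda>y. u *\<^sub>R E) has_vector_derivative 0) (at y)"
    by simp
  have "((\<lambda>y. cc u y) has_vector_derivative cyv u y) (at y)"
    unfolding cc_def cyv_def using has_vector_derivative_add[OF has_vector_derivative_add[OF a c] b] by simp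
  then show ?thesis by (simp add: has_vector_derivative_def)
qed

lemma chain_u:
  fixes f :: "real^3 \<Rightarrow> real"
  assumes "\<And>q. (f has_derivative Df q) (at q)" "u^2 + y^2 < 1"
  shows "((\<lambda>u. f (cc u y)) has_real_derivative Df (cc u y) (cu u y)) (at u)"
proof -
  have l: "linear (Df (cc u y))" using assms(1) has_derivative_linear by blast
  have "((\<lambda>u. f (cc u y)) has_derivative (\<lambda>s. Df (cc u y) (s *\<^sub>R cu u y))) (at u)"
    by (rule has_derivative_compose[OF cc_du[OF assms(2)] assms(1)])
  moreover have "(\<lambda>s. Df (cc u y) (s *\<^sub>R cu u y)) = (\<lambda>s. s * Df (cc u y) (cu u y))"
    using linear_scale[OF l] by auto
  ultimately show ?thesis by (simp add: has_field_derivative_def mult_commute_abs)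
qed

lemma chain_y:
  fixes f :: "real^3 \<Rightarrow> real"
  assumes "\<And>q. (f has_derivative Df q) (at q)" "u^2 + y^2 < 1"
  shows "((\<lambda>y. f (cc u y)) has_real_derivative Df (cc u y) (cyv u y)) (at y)"
proof -
  have l: "linear (Df (cc u y))" using assms(1) has_derivative_linear by blast
  have "((\<lambda>y. f (cc u y)) has_derivative (\<lambda>s. Df (cc u y) (s *\<^sub>R cyv u y))) (at y)"
    by (rule has_derivative_compose[OF cc_dy[OF assms(2)] assms(1)])
  moreover have "(\<lambda>s. Df (cc u y) (s *\<^sub>R cyv u y)) = (\<lambda>s. s * Df (cc u y) (cyv u y))"
    using linear_scale[OF l] by auto
  ultimately show ?thesis by (simp add: has_field_derivative_def mult_commute_abs)
qed

lemma cc_cont: "continuous_on {(u,y). u^2 + y^2 < 1} (\<lambda>z. cc (fst z) (snd z))"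
  unfolding cc_def nn_def by (intro continuous_intros)

end

lemma tf_deriv: "transition_function \<phi> \<Longrightarrow> (\<phi> has_real_derivative deriv \<phi> x) (at x)"
proof -
  assume "transition_function \<phi>"
  then have "((deriv ^^ 0) \<phi>) differentiable (at x)" unfolding transition_function_def by blast
  then show ?thesis by (simp add: DERIV_deriv_iff_real_differentiable)
qed

lemma tf_cont_deriv: "transition_function \<phi> \<Longrightarrow> continuous_on UNIV (deriv \<phi>)"
proof -
  assume "transition_function \<phi>"
  then have "\<And>x. ((deriv ^^ 1) \<phi>) differentiable (at x)" unfolding transition_function_def by blast
  then have "\<And>x. isCont (deriv \<phi>) x" by (simp add: differentiable_imp_continuous_within)
  then show ?thesis by (simp add: continuous_at_imp_continuous_on)
qed

lemma tf_cont: "transition_function \<phi> \<Longrightarrow> continuous_on UNIV \<phi>"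
  by (meson DERIV_isCont continuous_at_imp_continuous_on tf_deriv)

lemma tf_strict:
  assumes tf: "transition_function \<phi>" and ab: "-1 \<le> a" "a < b" "b \<le> 1"
  shows "\<phi> a < \<phi> b"
proof -
  have "\<exists>z>a. z < b \<and> \<phi> b - \<phi> a = (b - a) * deriv \<phi> z"
    by (rule MVT2[OF \<open>a < b\<close>]) (rule tf_deriv[OF tf])
  then obtain z where z: "a < z" "z < b" "\<phi> b - \<phi> a = (b - a) * deriv \<phi> z" by blast
  have "deriv \<phi> z > 0" using tf z ab unfolding transition_function_def by auto
  then have "(b - a) * deriv \<phi> z > 0" using ab by simp
  then show ?thesis using z by simp
qed

lemma tf_clamp:
  assumes tf: "transition_function \<phi>"
  shows "\<phi> x = \<phi> (max (-1) (min 1 x))"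
proof -
  have z: "\<forall>t \<le> -1. \<phi> t = 0" and o: "\<forall>t \<ge> 1. \<phi> t = 1" using tf unfolding transition_function_def by auto
  consider "x \<le> -1" | "x \<ge> 1" | "-1 < x \<and> x < 1" by linarith
  then show ?thesis
  proof cases
    case 1 then have "max (-1) (min 1 x) = -1" by simp
    then show ?thesis using z 1 by simp
  next
    case 2 then have "max (-1) (min 1 x) = 1" by simp
    then show ?thesis using o 2 by simp
  next
    case 3 then have "max (-1) (min 1 x) = x" by simp
    then show ?thesis by simp
  qed
qed

lemma tf_mono:
  assumes tf: "transition_function \<phi>" and "x \<le> y"
  shows "\<phi> x \<le> \<phi> y"
proof -
  define a where "a = max (-1) (min 1 x)"
  define b where "b = max (-1) (min 1 y)"
  have ab: "a \<le> b" "-1 \<le> a" "b \<le> 1" using assms(2) unfolding a_def b_def by linarith+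
  have "\<phi> a \<le> \<phi> b"
  proof (cases "a < b")
    case True then show ?thesis using tf_strict[OF tf ab(2) True ab(3)] by simp
  next
    case False then have "a = b" using ab by simp
    then show ?thesis by simp
  qed
  then show ?thesis using tf_clamp[OF tf, of x] tf_clamp[OF tf, of y] unfolding a_def b_def by simp
qed

lemma tf_range:
  assumes tf: "transition_function \<phi>"
  shows "0 \<le> \<phi> x" "\<phi> x \<le> 1"
proof -
  have "\<phi> (-1) = 0" "\<phi> 1 = 1" using tf unfolding transition_function_def by auto
  then show "0 \<le> \<phi> x" "\<phi> x \<le> 1"
    using tf_mono[OF tf, of "-1" "max (-1) (min 1 x)"] tf_mono[OF tf, of "max (-1) (min 1 x)" 1]
      tf_clamp[OF tf, of x] by auto
qed

lemma tf_inside: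
  assumes tf: "transition_function \<phi>" and "0 < \<phi> s" "\<phi> s < 1"
  shows "-1 < s" "s < 1"
proof -
  have z: "\<forall>t \<le> -1. \<phi> t = 0" and o: "\<forall>t \<ge> 1. \<phi> t = 1" using tf unfolding transition_function_def by auto
  show "-1 < s" using z assms(2) by (metis linorder_not_le order_less_irrefl)
  show "s < 1" using o assms(3) by (metis linorder_not_le order_less_irrefl)
qed

lemma tf_lower:
  assumes tf: "transition_function \<phi>" and t: "0 < t1" "t2 < 1"
  shows "\<exists>c>0. \<forall>s. t1 \<le> \<phi> s \<and> \<phi> s \<le> t2 \<longrightarrow> c \<le> deriv \<phi> s"
proof -
  define S where "S = {s. t1 \<le> \<phi> s \<and> \<phi> s \<le> t2}"
  have Ssub: "S \<subseteq> {-1..1}"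
  proof
    fix s assume "s \<in> S"
    then have "0 < \<phi> s" "\<phi> s < 1" using t unfolding S_def by auto
    then show "s \<in> {-1..1}" using tf_inside[OF tf] by (auto intro: less_imp_le)
  qed
  have "closed S" unfolding S_def
    using tf_cont[OF tf] by (intro closed_Collect_conj closed_Collect_le) (auto intro: continuous_on_subset)
  then have "compact S" using Ssub by (meson compact_Icc compact_imp_bounded bounded_subset compact_eq_bounded_closed)
  show ?thesis
  proof (cases "S = {}")
    case True then show ?thesis unfolding S_def by (intro exI[of _ 1]) auto
  next
    case False
    obtain s0 where s0: "s0 \<in> S" "\<forall>s\<in>S. deriv \<phi> s0 \<le> deriv \<phi> s"
      using continuous_attains_inf[OF \<open>compact S\<close> False continuous_on_subset[OF tf_cont_deriv[OF tf]]] by auto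
    have "0 < \<phi> s0" "\<phi> s0 < 1" using s0(1) t unfolding S_def by auto
    then have "-1 < s0" "s0 < 1" using tf_inside[OF tf] by auto
    then have "deriv \<phi> s0 > 0" using tf unfolding transition_function_def by auto
    then show ?thesis using s0 unfolding S_def by auto
  qed
qed

lemma hyp_arith:
  fixes A m11 m12 m21 m22 K w d Mb cw :: real
  assumes m: "\<bar>m11\<bar> \<le> Mb" "\<bar>m12\<bar> \<le> Mb" "\<bar>m21\<bar> \<le> Mb" "\<bar>m22\<bar> \<le> Mb"
    and K: "\<bar>K - d\<bar> \<le> \<bar>d\<bar>/2" and d: "d \<noteq> 0" and w: "\<bar>w\<bar> \<ge> cw" "cw > 0"
    and A: "A \<ge> 8*Mb/cw + 48*\<bar>d\<bar>/cw^2 + 4*Mb^2/\<bar>d\<bar> + 1"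
  shows "A*K + (m11*m22 - m12*m21) < 0 \<or>
         (A*K + (m11*m22 - m12*m21) > 0 \<and> (m11 + A*w + m22)^2 \<ge> 4*(A*K + (m11*m22 - m12*m21)))"
proof -
  have Mb0: "Mb \<ge> 0" using m(1) by linarith
  have dpos: "\<bar>d\<bar> > 0" using d by simp
  have n1: "8*Mb/cw \<ge> 0" "48*\<bar>d\<bar>/cw^2 \<ge> 0" "4*Mb^2/\<bar>d\<bar> \<ge> 0"
    using Mb0 w(2) dpos by simp_all
  have A1: "A \<ge> 8*Mb/cw" "A \<ge> 48*\<bar>d\<bar>/cw^2" "A \<ge> 4*Mb^2/\<bar>d\<bar> + 1"
    using A n1 by linarith+
  have Apos: "A > 0" using A1(3) n1(3) by linarith
  define R where "R = m11*m22 - m12*m21"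
  have R: "\<bar>R\<bar> \<le> 2*Mb^2"
  proof -
    have "\<bar>m11*m22\<bar> \<le> Mb*Mb" "\<bar>m12*m21\<bar> \<le> Mb*Mb"
      using m by (simp_all add: abs_mult mult_mono')
    then show ?thesis unfolding R_def by (simp add: power2_eq_square)
  qed
  have K1: "\<bar>K\<bar> \<ge> \<bar>d\<bar>/2" "\<bar>K\<bar> \<le> 3*\<bar>d\<bar>/2" using K by linarith+
  have "A*\<bar>d\<bar> \<ge> (4*Mb^2/\<bar>d\<bar> + 1)*\<bar>d\<bar>"
    using A1(3) dpos by (simp add: mult_right_mono)
  moreover have "(4*Mb^2/\<bar>d\<bar> + 1)*\<bar>d\<bar> = 4*Mb^2 + \<bar>d\<bar>" using dpos by (simp add: distrib_right)
  ultimately have "A*\<bar>d\<bar> \<ge> 4*Mb^2 + \<bar>d\<bar>" by simp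
  moreover have "A*\<bar>K\<bar> \<ge> A*(\<bar>d\<bar>/2)" using K1(1) Apos by (simp add: mult_left_mono)
  ultimately have AK: "A*\<bar>K\<bar> > 2*Mb^2" using dpos by simp
  have "\<bar>A*K\<bar> = A*\<bar>K\<bar>" using Apos by (simp add: abs_mult)
  then have nz: "A*K + R \<noteq> 0" using AK R by linarith
  have "A*K + R > 0 \<Longrightarrow> (m11 + A*w + m22)^2 \<ge> 4*(A*K + R)"
  proof -
    assume "A*K + R > 0"
    have "A*\<bar>K\<bar> \<le> A*(3*\<bar>d\<bar>/2)" using K1(2) Apos by (simp add: mult_left_mono)
    then have up: "A*K + R \<le> A*(3*\<bar>d\<bar>/2) + 2*Mb^2"
      using R \<open>\<bar>A*K\<bar> = A*\<bar>K\<bar>\<close> by (smt (verit) abs_ge_self)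
    have Acw: "A*cw \<ge> 8*Mb" using A1(1) w(2) by (simp add: field_simps)
    have Aw: "A*\<bar>w\<bar> \<ge> A*cw" using w Apos by (simp add: mult_left_mono)
    have trlow: "\<bar>m11 + A*w + m22\<bar> \<ge> A*cw/2"
    proof -
      have "\<bar>A*w\<bar> = A*\<bar>w\<bar>" using Apos by (simp add: abs_mult)
      then show ?thesis using Aw Acw m(1,4) by linarith
    qed
    have sq: "(m11 + A*w + m22)^2 \<ge> (A*cw/2)^2"
    proof -
      have "0 \<le> A*cw/2" using Apos w(2) by simp
      from power_mono[OF trlow this, of 2] show ?thesis by simp
    qed
    have c1: "A*cw^2 \<ge> 48*\<bar>d\<bar>" using A1(2) w(2) by (simp add: field_simps)
    have c2: "(A*cw)^2 \<ge> 64*Mb^2"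
    proof -
      have "0 \<le> 8*Mb" using Mb0 by simp
      from power_mono[OF Acw this, of 2] have "(8*Mb)^2 \<le> (A*cw)^2" .
      then show ?thesis by (simp add: power_mult_distrib)
    qed
    have "(A*cw/2)^2 = A*(A*cw^2)/4" by (simp add: power2_eq_square)
    moreover have "A*(A*cw^2) \<ge> A*(48*\<bar>d\<bar>)" using c1 Apos by (simp add: mult_left_mono)
    ultimately have "(A*cw/2)^2 \<ge> 12*A*\<bar>d\<bar>" by simp
    moreover have "(A*cw/2)^2 \<ge> 16*Mb^2" using c2 by (simp add: power_divide)
    ultimately have "(A*cw/2)^2 \<ge> 6*A*\<bar>d\<bar> + 8*Mb^2" by linarith
    moreover have "4*(A*(3*\<bar>d\<bar>/2) + 2*Mb^2) = 6*A*\<bar>d\<bar> + 8*Mb^2" by (simp add: algebra_simps)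
    ultimately have "4*(A*(3*\<bar>d\<bar>/2) + 2*Mb^2) \<le> (m11 + A*w + m22)^2" using sq by linarith
    moreover have "4*(A*K + R) \<le> 4*(A*(3*\<bar>d\<bar>/2) + 2*Mb^2)" using mult_left_mono[OF up, of 4] by simp
    ultimately show ?thesis by linarith
  qed
  then show ?thesis using nz unfolding R_def by linarith
qed

context twofield
begin

lemma DU_at:
  assumes "continuous (at x) f" "continuous (at x) g"
  shows "continuous (at x) (\<lambda>x. DU (f x) (g x))"
proof -
  have "isCont (\<lambda>z. DU (fst z) (snd z)) (f x, g x)"
    using cU continuous_on_eq_continuous_at[OF open_UNIV] by blast
  moreover have "isCont (\<lambda>x. (f x, g x)) x" using assms by (intro continuous_Pair)
  ultimately show ?thesis using continuous_at_compose[of x "\<lambda>x. (f x, g x)" "\<lambda>z. DU (fst z) (snd z)"]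
    by (simp add: o_def)
qed

lemma DV_at:
  assumes "continuous (at x) f" "continuous (at x) g"
  shows "continuous (at x) (\<lambda>x. DV (f x) (g x))"
proof -
  have "isCont (\<lambda>z. DV (fst z) (snd z)) (f x, g x)"
    using cV continuous_on_eq_continuous_at[OF open_UNIV] by blast
  moreover have "isCont (\<lambda>x. (f x, g x)) x" using assms by (intro continuous_Pair)
  ultimately show ?thesis using continuous_at_compose[of x "\<lambda>x. (f x, g x)" "\<lambda>z. DV (fst z) (snd z)"]
    by (simp add: o_def)
qed

lemma U_at: assumes "continuous (at x) f" shows "continuous (at x) (\<lambda>x. U (f x))"
proof -
  have "isCont U (f x)" using U_cont continuous_on_eq_continuous_at[OF open_UNIV] by blast
  then show ?thesis using continuous_at_compose[of x f U] assms by (simp add: o_def)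
qed
lemma V_at: assumes "continuous (at x) f" shows "continuous (at x) (\<lambda>x. V (f x))"
proof -
  have "isCont V (f x)" using V_cont continuous_on_eq_continuous_at[OF open_UNIV] by blast
  then show ?thesis using continuous_at_compose[of x f V] assms by (simp add: o_def)
qed

definition "rho q = sqrt ((q::real^3)$1^2 + q$3^2)"
definition "Eq q = (vector [-(q::real^3)$3, 0, q$1] :: real^3)"
definition "e1 q = (1 / rho q) *\<^sub>R Eq q"
definition "e2 q = (1 / rho q) *\<^sub>R ((vector [0,1,0] :: real^3) - q$2 *\<^sub>R q)"
definition "MM q t h = t *\<^sub>R DU q h + (1 - t) *\<^sub>R DV q h"
definition "Kf q t = (e1 q \<bullet> MM q t (e1 q)) * (U q $2 - V q $2) - (Eq q \<bullet> (U q - V q)) * (e2 q \<bullet> MM q t (e1 q))"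

lemma W_deriv:
  assumes "(\<phi> has_real_derivative \<phi>') (at (q$2/\<epsilon>))" "\<epsilon> \<noteq> 0"
  shows "((\<lambda>x. (1 - \<phi> (x$2/\<epsilon>)) *\<^sub>R V x + \<phi> (x$2/\<epsilon>) *\<^sub>R U x) has_derivative
     (\<lambda>h. (\<phi>'/\<epsilon> * h$2) *\<^sub>R (U q - V q) + MM q (\<phi> (q$2/\<epsilon>)) h)) (at q)"
proof -
  have i: "((\<lambda>x::real^3. x$2/\<epsilon>) has_derivative (\<lambda>h. h$2/\<epsilon>)) (at q)"
    by (intro derivative_eq_intros idn_deriv) (use assms(2) in auto)
  have f: "((\<lambda>x. \<phi> (x$2/\<epsilon>)) has_derivative (\<lambda>h. \<phi>' * (h$2/\<epsilon>))) (at q)"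
    using has_derivative_compose[OF i assms(1)[unfolded has_field_derivative_def]] by (simp add: mult.commute)
  show ?thesis
    unfolding MM_def
    apply (rule has_derivative_eq_rhs)
     apply (rule has_derivative_add)
      apply (rule has_derivative_scaleR[OF has_derivative_diff[OF has_derivative_const f] dV])
     apply (rule has_derivative_scaleR[OF f dU])
    apply (rule ext)
    apply (simp add: algebra_simps)
    done
qed

lemma tangent_lin:
  assumes q: "q \<in> sphere2" and r: "rho q > 0"
    and dphi: "(\<phi> has_real_derivative \<phi>') (at (q$2/\<epsilon>))" and eps: "\<epsilon> \<noteq> 0"
  defines "t \<equiv> \<phi> (q$2/\<epsilon>)" and "A \<equiv> \<phi>'/\<epsilon>"
  shows "tangent_linearization (\<lambda>x. (1 - \<phi> (x$2/\<epsilon>)) *\<^sub>R V x + \<phi> (x$2/\<epsilon>) *\<^sub>R U x) q (e1 q) (e2 q)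
     ((e1 q \<bullet> MM q t (e1 q)) + A * (U q $2 - V q $2) + (e2 q \<bullet> MM q t (e2 q)),
      A * Kf q t + ((e1 q \<bullet> MM q t (e1 q)) * (e2 q \<bullet> MM q t (e2 q)) - (e1 q \<bullet> MM q t (e2 q)) * (e2 q \<bullet> MM q t (e1 q))))"
proof -
  let ?L = "\<lambda>h. (\<phi>'/\<epsilon> * h$2) *\<^sub>R (U q - V q) + MM q t h"
  have der: "((\<lambda>x. (1 - \<phi> (x$2/\<epsilon>)) *\<^sub>R V x + \<phi> (x$2/\<epsilon>) *\<^sub>R U x) has_derivative ?L) (at q)"
    using W_deriv[OF dphi eps] unfolding t_def .
  have qq: "q$1^2 + q$2^2 + q$3^2 = 1"
    using q unfolding sphere2_def by (simp add: norm_eq_sqrt_inner inner3 power2_eq_square)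
  have rr: "(rho q)^2 = q$1^2 + q$3^2" unfolding rho_def by simp
  have rr2: "rho q * rho q = q$1^2 + q$3^2" using rr by (simp add: power2_eq_square)
  define w where "w = U q - V q"
  have wq: "q \<bullet> w = 0" using tU[OF q] tV[OF q] unfolding w_def by (simp add: inner_diff_right)
  have e1_2: "e1 q $ 2 = 0" by (simp add: e1_def Eq_def)
  have e2_2: "e2 q $ 2 = rho q"
  proof -
    have "e2 q $ 2 = (1 - q$2*q$2) / rho q" by (simp add: e2_def)
    also have "\<dots> = rho q * rho q / rho q" using qq rr2 by (simp add: power2_eq_square algebra_simps)
    finally show ?thesis using r by simp
  qed
  have Ew: "rho q * (e1 q \<bullet> w) = Eq q \<bullet> w" using r by (simp add: e1_def)
  have e2w: "rho q * (e2 q \<bullet> w) = w$2"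
  proof -
    have "rho q * (e2 q \<bullet> w) = (vector [0,1,0] - q$2 *\<^sub>R q) \<bullet> w" using r by (simp add: e2_def)
    also have "\<dots> = w$2 - q$2 * (q \<bullet> w)" by (simp add: inner_diff_left inner3 algebra_simps)
    finally show ?thesis using wq by simp
  qed
  have L1: "e1 q \<bullet> ?L (e1 q) = e1 q \<bullet> MM q t (e1 q)" "e2 q \<bullet> ?L (e1 q) = e2 q \<bullet> MM q t (e1 q)"
    by (simp_all add: e1_2 inner_add_right)
  have L2: "e1 q \<bullet> ?L (e2 q) = A * (Eq q \<bullet> w) + e1 q \<bullet> MM q t (e2 q)"
    "e2 q \<bullet> ?L (e2 q) = A * w$2 + e2 q \<bullet> MM q t (e2 q)"
    unfolding inner_add_right inner_scaleR_right e2_2 w_def[symmetric] A_def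
    using Ew e2w by (simp_all add: algebra_simps)
  have n1: "norm (e1 q) = 1"
  proof -
    have "norm (Eq q) = rho q" by (simp add: norm3 Eq_def rho_def add.commute)
    then show ?thesis using r by (simp add: e1_def)
  qed
  have n2: "norm (e2 q) = 1"
  proof -
    have "norm ((vector [0,1,0] :: real^3) - q$2 *\<^sub>R q) = sqrt ((q$2*q$1)^2 + (1 - q$2*q$2)^2 + (q$2*q$3)^2)"
      by (simp add: norm3)
    also have "(q$2*q$1)^2 + (1 - q$2*q$2)^2 + (q$2*q$3)^2 = (q$1^2 + q$3^2)"
      using qq by algebra
    moreover have nz: "\<not>(q$1 = 0 \<and> q$3 = 0)" using r by (auto simp: rho_def)
    ultimately show ?thesis using r by (simp add: e2_def rho_def)
  qed
  have o1: "e1 q \<bullet> e2 q = 0" "e1 q \<bullet> q = 0" "e2 q \<bullet> q = 0"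
  proof -
    show "e1 q \<bullet> e2 q = 0" by (simp add: e1_def e2_def Eq_def inner3 algebra_simps)
    show "e1 q \<bullet> q = 0" by (simp add: e1_def Eq_def inner3 algebra_simps)
    have "(vector [0,1,0] - q$2 *\<^sub>R q) \<bullet> q = q$2 * (1 - (q$1^2 + q$2^2 + q$3^2))"
      by (simp add: inner3 algebra_simps power2_eq_square)
    then show "e2 q \<bullet> q = 0" using qq by (simp add: e2_def)
  qed
  have eq: "(e1 q \<bullet> ?L (e1 q) + e2 q \<bullet> ?L (e2 q),
       (e1 q \<bullet> ?L (e1 q)) * (e2 q \<bullet> ?L (e2 q)) - (e1 q \<bullet> ?L (e2 q)) * (e2 q \<bullet> ?L (e1 q))) =
     ((e1 q \<bullet> MM q t (e1 q)) + A * (U q $2 - V q $2) + (e2 q \<bullet> MM q t (e2 q)),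
      A * Kf q t + ((e1 q \<bullet> MM q t (e1 q)) * (e2 q \<bullet> MM q t (e2 q)) - (e1 q \<bullet> MM q t (e2 q)) * (e2 q \<bullet> MM q t (e1 q))))"
    unfolding L1 L2 Kf_def w_def by (simp add: algebra_simps)
  show ?thesis
    unfolding tangent_linearization_def
    by (intro exI[of _ ?L] conjI der n1 n2 o1 eq[symmetric])
qed

end

lemma continuous_vector3:
  assumes "continuous F f" "continuous F g" "continuous F h"
  shows "continuous F (\<lambda>x. vector [f x, g x, h x] :: real^3)"
  unfolding vector3_axis by (intro continuous_intros assms)

lemma cont2_eps:
  fixes F :: "'a::real_normed_vector \<Rightarrow> 'b::real_normed_vector \<Rightarrow> real"
  assumes "continuous_on UNIV (\<lambda>z. F (fst z) (snd z))" "e > 0"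
  shows "\<exists>r>0. \<forall>q h. norm (q - p0) < r \<longrightarrow> norm (h - h0) < r \<longrightarrow> \<bar>F q h - F p0 h0\<bar> < e"
proof -
  have "continuous (at (p0,h0)) (\<lambda>z. F (fst z) (snd z))"
    using assms(1) continuous_on_eq_continuous_at[OF open_UNIV] by blast
  from cont_at_eps[OF this assms(2)] obtain r where r: "r > 0"
    "\<forall>x. dist x (p0,h0) < r \<longrightarrow> \<bar>F (fst x) (snd x) - F p0 h0\<bar> < e" by auto
  show ?thesis
  proof (intro exI[of _ "r/2"] conjI allI impI)
    fix q h assume "norm (q - p0) < r/2" "norm (h - h0) < r/2"
    then have "dist (q,h) (p0,h0) < r" by (intro dist_pair_lt) (auto simp: dist_norm)
    then show "\<bar>F q h - F p0 h0\<bar> < e" using r(2) by auto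
  qed (use r in auto)
qed

lemma cont1_eps:
  fixes f :: "'a::real_normed_vector \<Rightarrow> real"
  assumes "continuous (at p0) f" "e > 0"
  shows "\<exists>r>0. \<forall>q. norm (q - p0) < r \<longrightarrow> \<bar>f q - f p0\<bar> < e"
  using cont_at_eps[OF assms] by (simp add: dist_norm)

locale msetting = atp +
  fixes \<phi> :: "real \<Rightarrow> real" and d :: real
  assumes tf: "transition_function \<phi>"
    and sg: "U p $2 * V p $2 < 0"
    and Dp: "D p = 0"
    and dd: "DD p E = d" and dnz: "d \<noteq> 0"
    and p3: "p$3 \<ge> 0"
begin

definition "ts = V p $2 / (V p $2 - U p $2)"

lemma pS: "p \<in> sphere2" using pp by (simp add: sphere2_def norm_eq_sqrt_inner)

lemma ts_range: "0 < ts" "ts < 1"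
  using sg unfolding ts_def
  by (auto simp: zero_less_mult_iff mult_less_0_iff divide_pos_pos divide_less_eq divide_neg_neg)

lemma ts_zero: "ts *\<^sub>R U p + (1 - ts) *\<^sub>R V p = 0"
proof (rule zero_lemma)
  show "p \<bullet> p = 1" by (rule pp)
  show "0 < p$1^2 + p$3^2" using p13 by simp
  show "(ts *\<^sub>R U p + (1 - ts) *\<^sub>R V p) \<bullet> p = 0"
    using tU[OF pS] tV[OF pS] by (simp add: inner_commute[of _ p] inner_add_right)
  show "V p \<bullet> p = 0" using tV[OF pS] by (simp add: inner_commute)
  have "V p $2 - U p $2 \<noteq> 0" using sg by auto
  then show "(ts *\<^sub>R U p + (1 - ts) *\<^sub>R V p) $ 2 = 0"
    unfolding ts_def by (simp add: field_simps)
  show "V p $ 2 \<noteq> 0" using sg by auto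
  show "tp (ts *\<^sub>R U p + (1 - ts) *\<^sub>R V p) (V p) p = 0"
    using Dp by (simp add: tp_lin1 tp_same D_def)
qed

lemma d_formula: "d = tp (U p - V p) (MM p ts E) p"
proof -
  have "d = tp (DU p E) (V p) p + tp (U p) (DV p E) p + tp (U p) (V p) E"
    using dd by (simp add: DD_def)
  also have "\<dots> = tp (U p - V p) (ts *\<^sub>R DU p E + (1-ts) *\<^sub>R DV p E) p"
    by (rule d_identity[OF ts_zero]) (use ts_range in simp)
  finally show ?thesis by (simp add: MM_def)
qed

lemma rho_p: "rho p = 1" using p13 by (simp add: rho_def)
lemma Eq_p: "Eq p = E" by (simp add: Eq_def E_def)
lemma e1_p: "e1 p = E" by (simp add: e1_def rho_p Eq_p)
lemma e2_p: "e2 p = vector [0,1,0]" by (simp add: e2_def rho_p p2)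

lemma Kf_p: "Kf p ts = d"
proof -
  have "Kf p ts = (E \<bullet> MM p ts E) * (U p - V p)$2 - (E \<bullet> (U p - V p)) * (MM p ts E)$2"
    by (simp add: Kf_def e1_p e2_p Eq_p inner3)
  also have "\<dots> = tp (U p - V p) (MM p ts E) p"
    using K_identity[OF p2, of "U p - V p" "MM p ts E"] by (simp add: E_def)
  finally show ?thesis using d_formula by simp
qed

lemma rho_at: "continuous (at x) f \<Longrightarrow> continuous (at x) (\<lambda>x. rho (f x))"
  unfolding rho_def by (intro continuous_intros)

lemma e1_at: "continuous (at x) f \<Longrightarrow> rho (f x) \<noteq> 0 \<Longrightarrow> continuous (at x) (\<lambda>x. e1 (f x))"
  unfolding e1_def Eq_def divide_inverse
  by (intro continuous_intros continuous_vector3 rho_at) auto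

lemma e2_at: "continuous (at x) f \<Longrightarrow> rho (f x) \<noteq> 0 \<Longrightarrow> continuous (at x) (\<lambda>x. e2 (f x))"
  unfolding e2_def divide_inverse
  by (intro continuous_intros continuous_vector3 rho_at) auto

lemma MM_at: "continuous (at x) f \<Longrightarrow> continuous (at x) g \<Longrightarrow> continuous (at x) h \<Longrightarrow>
   continuous (at x) (\<lambda>x. MM (f x) (g x) (h x))"
  unfolding MM_def by (intro continuous_intros DU_at DV_at)

lemma m_cont:
  assumes "ea \<in> {e1, e2}" "eb \<in> {e1, e2}"
  shows "continuous (at (p, ts)) (\<lambda>z. ea (fst z) \<bullet> MM (fst z) (snd z) (eb (fst z)))"
proof -
  have f: "continuous (at (p,ts)) (\<lambda>z::(real^3)\<times>real. fst z)" by (intro continuous_intros)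
  have r: "rho (fst (p,ts)) \<noteq> 0" using rho_p by simp
  have a: "continuous (at (p,ts)) (\<lambda>z::(real^3)\<times>real. ea (fst z))"
    using assms(1) e1_at[OF f r] e2_at[OF f r] by auto
  have b: "continuous (at (p,ts)) (\<lambda>z::(real^3)\<times>real. eb (fst z))"
    using assms(2) e1_at[OF f r] e2_at[OF f r] by auto
  show ?thesis by (intro continuous_intros MM_at a b f)
qed

lemma Kf_cont: "continuous (at (p, ts)) (\<lambda>z. Kf (fst z) (snd z))"
proof -
  have f: "continuous (at (p,ts)) (\<lambda>z::(real^3)\<times>real. fst z)" by (intro continuous_intros)
  have r: "rho (fst (p,ts)) \<noteq> 0" using rho_p by simp
  show ?thesis unfolding Kf_def Eq_def
    by (intro continuous_intros MM_at e1_at[OF f r] e2_at[OF f r] f U_at V_at continuous_vector3)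
qed

lemma ratio_cont: "continuous (at p) (\<lambda>q. V q $2 / (V q $2 - U q $2))"
proof -
  have "V p $2 - U p $2 \<noteq> 0" using sg by auto
  then show ?thesis by (intro continuous_intros U_at V_at) auto
qed

lemma U2_cont: "continuous (at p) (\<lambda>q. U q $2)" by (intro continuous_intros U_at)
lemma V2_cont: "continuous (at p) (\<lambda>q. V q $2)" by (intro continuous_intros V_at)

end

context msetting
begin

definition "Wf \<epsilon> x = (1 - \<phi> (x$2/\<epsilon>)) *\<^sub>R V x + \<phi> (x$2/\<epsilon>) *\<^sub>R U x"

abbreviation "m11 q t \<equiv> e1 q \<bullet> MM q t (e1 q)"
abbreviation "m12 q t \<equiv> e1 q \<bullet> MM q t (e2 q)"
abbreviation "m21 q t \<equiv> e2 q \<bullet> MM q t (e1 q)"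
abbreviation "m22 q t \<equiv> e2 q \<bullet> MM q t (e2 q)"

lemma pt_eps:
  fixes g :: "(real^3) \<times> real \<Rightarrow> real"
  assumes "continuous (at (p,ts)) g" "e > 0"
  shows "\<exists>r>0. \<forall>q t. norm (q - p) < r \<longrightarrow> \<bar>t - ts\<bar> < r \<longrightarrow> \<bar>g (q,t) - g (p,ts)\<bar> < e"
proof -
  obtain r where r: "r > 0" "\<forall>x. dist x (p,ts) < r \<longrightarrow> \<bar>g x - g (p,ts)\<bar> < e"
    using cont_at_eps[OF assms] by auto
  show ?thesis
  proof (intro exI[of _ "r/2"] conjI allI impI)
    fix q t assume "norm (q - p) < r/2" "\<bar>t - ts\<bar> < r/2"
    then have "dist (q,t) (p,ts) < r" by (intro dist_pair_lt) (auto simp: dist_norm dist_real_def)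
    then show "\<bar>g (q,t) - g (p,ts)\<bar> < e" using r(2) by auto
  qed (use r in auto)
qed

lemma bnd_aux: "\<bar>x - c\<bar> < 1 \<Longrightarrow> (s::real) \<ge> 0 \<Longrightarrow> \<bar>x\<bar> \<le> \<bar>c\<bar> + s + 1"
  by linarith

lemma hyp_consts:
  "\<exists>rK Mb. rK > 0 \<and> Mb \<ge> 0 \<and> (\<forall>q t. norm (q - p) < rK \<longrightarrow> \<bar>t - ts\<bar> < rK \<longrightarrow>
      \<bar>m11 q t\<bar> \<le> Mb \<and> \<bar>m12 q t\<bar> \<le> Mb \<and> \<bar>m21 q t\<bar> \<le> Mb \<and> \<bar>m22 q t\<bar> \<le> Mb \<and>
      \<bar>Kf q t - d\<bar> \<le> \<bar>d\<bar>/2)"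
proof -
  have dpos: "\<bar>d\<bar>/2 > 0" using dnz by simp
  obtain r1 where r1: "r1 > 0" "\<forall>q t. norm (q - p) < r1 \<longrightarrow> \<bar>t - ts\<bar> < r1 \<longrightarrow> \<bar>m11 q t - m11 p ts\<bar> < 1"
    using pt_eps[OF m_cont[of e1 e1], of 1] by auto
  obtain r2 where r2: "r2 > 0" "\<forall>q t. norm (q - p) < r2 \<longrightarrow> \<bar>t - ts\<bar> < r2 \<longrightarrow> \<bar>m12 q t - m12 p ts\<bar> < 1"
    using pt_eps[OF m_cont[of e1 e2], of 1] by auto
  obtain r3 where r3: "r3 > 0" "\<forall>q t. norm (q - p) < r3 \<longrightarrow> \<bar>t - ts\<bar> < r3 \<longrightarrow> \<bar>m21 q t - m21 p ts\<bar> < 1"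
    using pt_eps[OF m_cont[of e2 e1], of 1] by auto
  obtain r4 where r4: "r4 > 0" "\<forall>q t. norm (q - p) < r4 \<longrightarrow> \<bar>t - ts\<bar> < r4 \<longrightarrow> \<bar>m22 q t - m22 p ts\<bar> < 1"
    using pt_eps[OF m_cont[of e2 e2], of 1] by auto
  obtain r5 where r5: "r5 > 0" "\<forall>q t. norm (q - p) < r5 \<longrightarrow> \<bar>t - ts\<bar> < r5 \<longrightarrow> \<bar>Kf q t - Kf p ts\<bar> < \<bar>d\<bar>/2"
    using pt_eps[OF Kf_cont dpos] by auto
  define Mb where "Mb = \<bar>m11 p ts\<bar> + \<bar>m12 p ts\<bar> + \<bar>m21 p ts\<bar> + \<bar>m22 p ts\<bar> + 1"
  have all: "\<forall>q t. norm (q - p) < min r1 (min r2 (min r3 (min r4 r5))) \<longrightarrow> \<bar>t - ts\<bar> < min r1 (min r2 (min r3 (min r4 r5))) \<longrightarrow>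
      \<bar>m11 q t\<bar> \<le> Mb \<and> \<bar>m12 q t\<bar> \<le> Mb \<and> \<bar>m21 q t\<bar> \<le> Mb \<and> \<bar>m22 q t\<bar> \<le> Mb \<and>
      \<bar>Kf q t - d\<bar> \<le> \<bar>d\<bar>/2"
  proof (intro allI impI)
    fix q t assume a: "norm (q - p) < min r1 (min r2 (min r3 (min r4 r5)))" "\<bar>t - ts\<bar> < min r1 (min r2 (min r3 (min r4 r5)))"
    have "\<bar>m11 q t - m11 p ts\<bar> < 1" "\<bar>m12 q t - m12 p ts\<bar> < 1" "\<bar>m21 q t - m21 p ts\<bar> < 1"
      "\<bar>m22 q t - m22 p ts\<bar> < 1" "\<bar>Kf q t - Kf p ts\<bar> < \<bar>d\<bar>/2"
      using a r1 r2 r3 r4 r5 by auto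
    note b = this
    have M: "Mb = \<bar>m11 p ts\<bar> + (\<bar>m12 p ts\<bar> + \<bar>m21 p ts\<bar> + \<bar>m22 p ts\<bar>) + 1"
      "Mb = \<bar>m12 p ts\<bar> + (\<bar>m11 p ts\<bar> + \<bar>m21 p ts\<bar> + \<bar>m22 p ts\<bar>) + 1"
      "Mb = \<bar>m21 p ts\<bar> + (\<bar>m12 p ts\<bar> + \<bar>m11 p ts\<bar> + \<bar>m22 p ts\<bar>) + 1"
      "Mb = \<bar>m22 p ts\<bar> + (\<bar>m12 p ts\<bar> + \<bar>m21 p ts\<bar> + \<bar>m11 p ts\<bar>) + 1"
      unfolding Mb_def by simp_all
    have "\<bar>m11 q t\<bar> \<le> Mb" unfolding M(1) by (rule bnd_aux[OF b(1)]) simp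
    moreover have "\<bar>m12 q t\<bar> \<le> Mb" unfolding M(2) by (rule bnd_aux[OF b(2)]) simp
    moreover have "\<bar>m21 q t\<bar> \<le> Mb" unfolding M(3) by (rule bnd_aux[OF b(3)]) simp
    moreover have "\<bar>m22 q t\<bar> \<le> Mb" unfolding M(4) by (rule bnd_aux[OF b(4)]) simp
    moreover have "\<bar>Kf q t - d\<bar> \<le> \<bar>d\<bar>/2" using b(5) Kf_p by simp
    ultimately show "\<bar>m11 q t\<bar> \<le> Mb \<and> \<bar>m12 q t\<bar> \<le> Mb \<and> \<bar>m21 q t\<bar> \<le> Mb \<and> \<bar>m22 q t\<bar> \<le> Mb \<and> \<bar>Kf q t - d\<bar> \<le> \<bar>d\<bar>/2"
      by blast
  qed
  have pos: "min r1 (min r2 (min r3 (min r4 r5))) > 0" using r1 r2 r3 r4 r5 by simp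
  have M0: "Mb \<ge> 0" unfolding Mb_def by simp
  show ?thesis using pos M0 all by blast
qed

lemma hyp_at:
  assumes q: "q \<in> sphere2" "rho q > 0" "Wf \<epsilon> q = 0" and eps: "\<epsilon> > 0"
    and H: "\<bar>m11 q t\<bar> \<le> Mb" "\<bar>m12 q t\<bar> \<le> Mb" "\<bar>m21 q t\<bar> \<le> Mb" "\<bar>m22 q t\<bar> \<le> Mb"
      "\<bar>Kf q t - d\<bar> \<le> \<bar>d\<bar>/2"
    and t: "t = \<phi> (q$2/\<epsilon>)"
    and w: "\<bar>U q $2 - V q $2\<bar> \<ge> cw" "cw > 0"
    and A: "deriv \<phi> (q$2/\<epsilon>) / \<epsilon> \<ge> 8*Mb/cw + 48*\<bar>d\<bar>/cw^2 + 4*Mb^2/\<bar>d\<bar> + 1"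
  shows "hyperbolic_saddle (Wf \<epsilon>) q \<or> hyperbolic_node (Wf \<epsilon>) q"
proof -
  have W: "Wf \<epsilon> = (\<lambda>x. (1 - \<phi> (x$2/\<epsilon>)) *\<^sub>R V x + \<phi> (x$2/\<epsilon>) *\<^sub>R U x)"
    by (simp add: Wf_def[abs_def])
  have TL: "tangent_linearization (Wf \<epsilon>) q (e1 q) (e2 q)
     (m11 q t + deriv \<phi> (q$2/\<epsilon>) / \<epsilon> * (U q $2 - V q $2) + m22 q t,
      deriv \<phi> (q$2/\<epsilon>) / \<epsilon> * Kf q t + (m11 q t * m22 q t - m12 q t * m21 q t))"
    unfolding W t using tangent_lin[OF q(1,2) tf_deriv[OF tf] ] eps by simp
  have sp: "sing_point_S2 (Wf \<epsilon>) q" using q by (simp add: sing_point_S2_def)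
  from hyp_arith[OF H(1-4) H(5) dnz w A]
  show ?thesis
  proof
    assume "deriv \<phi> (q$2/\<epsilon>) / \<epsilon> * Kf q t + (m11 q t * m22 q t - m12 q t * m21 q t) < 0"
    then have "hyperbolic_saddle (Wf \<epsilon>) q"
      unfolding hyperbolic_saddle_def using sp TL by blast
    then show ?thesis ..
  next
    assume "deriv \<phi> (q$2/\<epsilon>) / \<epsilon> * Kf q t + (m11 q t * m22 q t - m12 q t * m21 q t) > 0 \<and>
      (m11 q t + deriv \<phi> (q$2/\<epsilon>) / \<epsilon> * (U q $2 - V q $2) + m22 q t)^2 \<ge>
      4 * (deriv \<phi> (q$2/\<epsilon>) / \<epsilon> * Kf q t + (m11 q t * m22 q t - m12 q t * m21 q t))"
    then have "hyperbolic_node (Wf \<epsilon>) q"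
      unfolding hyperbolic_node_def using sp TL by blast
    then show ?thesis ..
  qed
qed

end

locale boxs = msetting +
  fixes rK Mb r a b Cy BU BV cw \<delta>t c\<phi> :: real
  assumes Hk: "rK > 0" "Mb \<ge> 0" "\<forall>q t. norm (q - p) < rK \<longrightarrow> \<bar>t - ts\<bar> < rK \<longrightarrow>
      \<bar>m11 q t\<bar> \<le> Mb \<and> \<bar>m12 q t\<bar> \<le> Mb \<and> \<bar>m21 q t\<bar> \<le> Mb \<and> \<bar>m22 q t\<bar> \<le> Mb \<and>
      \<bar>Kf q t - d\<bar> \<le> \<bar>d\<bar>/2"
    and dt: "0 < \<delta>t" "\<delta>t \<le> rK/2" "0 < ts - \<delta>t" "ts + \<delta>t < 1"
    and cphi: "c\<phi> > 0" "\<forall>s. ts - \<delta>t \<le> \<phi> s \<and> \<phi> s \<le> ts + \<delta>t \<longrightarrow> c\<phi> \<le> deriv \<phi> s"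
    and r: "0 < r" "r \<le> rK"
    and rDD1: "\<forall>q h. norm (q - p) < r \<longrightarrow> norm (h - E) < r \<longrightarrow> \<bar>DD q h - d\<bar> < \<bar>d\<bar>/4"
    and rDD2: "\<forall>q h. norm (q - p) < r \<longrightarrow> norm (h - ey) < r \<longrightarrow> \<bar>DD q h\<bar> \<le> Cy * \<bar>d\<bar>"
    and Cy: "Cy \<ge> 0"
    and rU: "\<forall>q h. norm (q - p) < r \<longrightarrow> (norm (h - E) < r \<or> norm (h - ey) < r) \<longrightarrow> \<bar>DU q h $2\<bar> \<le> BU"
    and rV: "\<forall>q h. norm (q - p) < r \<longrightarrow> (norm (h - E) < r \<or> norm (h - ey) < r) \<longrightarrow> \<bar>DV q h $2\<bar> \<le> BV"
    and rsgn: "\<forall>q. norm (q - p) < r \<longrightarrow> \<bar>U q $2 - U p $2\<bar> < \<bar>U p $2\<bar>/2 \<and> \<bar>V q $2 - V p $2\<bar> < \<bar>V p $2\<bar>/2"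
    and rrat: "\<forall>q. norm (q - p) < r \<longrightarrow> \<bar>V q $2 / (V q $2 - U q $2) - ts\<bar> < \<delta>t"
    and cw: "cw = (\<bar>U p $2\<bar> + \<bar>V p $2\<bar>)/2"
    and a: "0 < a" "a \<le> r/8" "a \<le> 1/4" "p$3 > 0 \<longrightarrow> a \<le> p$3/4"
    and b: "0 < b" "b \<le> r/8" "b \<le> 1/4" "b * (Cy + 1) \<le> a/2"
begin

lemma sq_small: "\<bar>x\<bar> \<le> 1/4 \<Longrightarrow> x^2 \<le> (1/16::real)"
proof -
  assume "\<bar>x\<bar> \<le> 1/4"
  from power_mono[OF this abs_ge_zero, of 2] show ?thesis by (simp add: power_divide)
qed

lemma box:
  assumes "\<bar>u\<bar> \<le> a" "\<bar>y\<bar> \<le> b"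
  shows "u^2 + y^2 \<le> 1/8" "norm (cc u y - p) < r" "norm (cu u y - E) < r" "norm (cyv u y - ey) < r"
proof -
  have "u^2 \<le> 1/16" "y^2 \<le> 1/16" using sq_small assms a b by auto
  then show s: "u^2 + y^2 \<le> 1/8" by simp
  have "\<bar>u\<bar> \<le> 1" "\<bar>y\<bar> \<le> 1" using assms a b by auto
  from cc_dist[OF _ this] s have "norm (cc u y - p) \<le> 2 * (\<bar>u\<bar> + \<bar>y\<bar>)" by simp
  then have "norm (cc u y - p) \<le> 2 * \<bar>u\<bar> + 2 * \<bar>y\<bar>" by (simp add: distrib_left)
  then show "norm (cc u y - p) < r" using assms a(2) b(2) r(1) by linarith
  have s2: "u^2 + y^2 \<le> 1/2" using s by simp
  show "norm (cu u y - E) < r" using cu_dist[OF s2] assms a(2) r(1) by linarith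
  show "norm (cyv u y - ey) < r" using cyv_dist[OF s2] assms b(2) r(1) by linarith
qed

definition "Dn u y = D (cc u y) / d"

lemma in_disc: "\<bar>u\<bar> \<le> a \<Longrightarrow> \<bar>y\<bar> \<le> b \<Longrightarrow> u^2 + y^2 < 1"
  using box(1)[of u y] by simp

lemma Dn_du:
  assumes "\<bar>u\<bar> \<le> a" "\<bar>y\<bar> \<le> b"
  shows "((\<lambda>u. Dn u y) has_real_derivative DD (cc u y) (cu u y) / d) (at u)"
    "3/4 \<le> DD (cc u y) (cu u y) / d" "DD (cc u y) (cu u y) / d \<le> 5/4"
proof -
  show "((\<lambda>u. Dn u y) has_real_derivative DD (cc u y) (cu u y) / d) (at u)"
    unfolding Dn_def by (rule DERIV_cdivide[OF chain_u[OF D_deriv in_disc[OF assms]]])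
  have "\<bar>DD (cc u y) (cu u y) - d\<bar> < \<bar>d\<bar>/4" using rDD1 box[OF assms] by blast
  moreover have "DD (cc u y) (cu u y) / d - 1 = (DD (cc u y) (cu u y) - d) / d" using dnz by (simp add: field_simps)
  ultimately have "\<bar>DD (cc u y) (cu u y) / d - 1\<bar> < 1/4"
    using dnz by (simp add: abs_divide divide_less_eq)
  then show "3/4 \<le> DD (cc u y) (cu u y) / d" "DD (cc u y) (cu u y) / d \<le> 5/4" by linarith+
qed

lemma Dn_dy:
  assumes "\<bar>u\<bar> \<le> a" "\<bar>y\<bar> \<le> b"
  shows "((\<lambda>y. Dn u y) has_real_derivative DD (cc u y) (cyv u y) / d) (at y)"
    "\<bar>DD (cc u y) (cyv u y) / d\<bar> \<le> Cy"
proof -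
  show "((\<lambda>y. Dn u y) has_real_derivative DD (cc u y) (cyv u y) / d) (at y)"
    unfolding Dn_def by (rule DERIV_cdivide[OF chain_y[OF D_deriv in_disc[OF assms]]])
  have "\<bar>DD (cc u y) (cyv u y)\<bar> \<le> Cy * \<bar>d\<bar>" using rDD2 box[OF assms] by blast
  then show "\<bar>DD (cc u y) (cyv u y) / d\<bar> \<le> Cy" using dnz by (simp add: abs_divide divide_le_eq)
qed

lemma U2_du:
  assumes "\<bar>u\<bar> \<le> a" "\<bar>y\<bar> \<le> b"
  shows "((\<lambda>u. U (cc u y) $2) has_real_derivative DU (cc u y) (cu u y) $2) (at u)"
    "\<bar>DU (cc u y) (cu u y) $2\<bar> \<le> BU"
  using chain_u[OF Un_deriv in_disc[OF assms]] rU box[OF assms] by blast+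
lemma U2_dy:
  assumes "\<bar>u\<bar> \<le> a" "\<bar>y\<bar> \<le> b"
  shows "((\<lambda>y. U (cc u y) $2) has_real_derivative DU (cc u y) (cyv u y) $2) (at y)"
    "\<bar>DU (cc u y) (cyv u y) $2\<bar> \<le> BU"
  using chain_y[OF Un_deriv in_disc[OF assms]] rU box[OF assms] by blast+
lemma V2_du:
  assumes "\<bar>u\<bar> \<le> a" "\<bar>y\<bar> \<le> b"
  shows "((\<lambda>u. V (cc u y) $2) has_real_derivative DV (cc u y) (cu u y) $2) (at u)"
    "\<bar>DV (cc u y) (cu u y) $2\<bar> \<le> BV"
  using chain_u[OF Vn_deriv in_disc[OF assms]] rV box[OF assms] by blast+
lemma V2_dy:
  assumes "\<bar>u\<bar> \<le> a" "\<bar>y\<bar> \<le> b"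
  shows "((\<lambda>y. V (cc u y) $2) has_real_derivative DV (cc u y) (cyv u y) $2) (at y)"
    "\<bar>DV (cc u y) (cyv u y) $2\<bar> \<le> BV"
  using chain_y[OF Vn_deriv in_disc[OF assms]] rV box[OF assms] by blast+

lemma cc00: "cc 0 0 = p" by (simp add: cc_def nn_def)

lemma Dn00: "Dn 0 0 = 0" by (simp add: Dn_def cc00 Dp)

lemma Dn_mono:
  assumes "\<bar>y\<bar> \<le> b" "-a \<le> u1" "u1 \<le> u2" "u2 \<le> a"
  shows "Dn u2 y - Dn u1 y \<ge> 3/4 * (u2 - u1)"
proof (rule deriv_lower[of "-a" a "\<lambda>u. Dn u y" "\<lambda>u. DD (cc u y) (cu u y) / d"])
  fix x assume "-a \<le> x" "x \<le> a"
  then have x: "\<bar>x\<bar> \<le> a" by simp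
  show "((\<lambda>u. Dn u y) has_real_derivative DD (cc x y) (cu x y) / d) (at x)" by (rule Dn_du(1)[OF x assms(1)])
  show "3/4 \<le> DD (cc x y) (cu x y) / d" by (rule Dn_du(2)[OF x assms(1)])
qed (use assms in auto)

lemma Dn_ylip:
  assumes "\<bar>u\<bar> \<le> a" "\<bar>y1\<bar> \<le> b" "\<bar>y2\<bar> \<le> b"
  shows "\<bar>Dn u y1 - Dn u y2\<bar> \<le> Cy * \<bar>y1 - y2\<bar>"
proof (rule deriv_lip[of "-b" b "\<lambda>y. Dn u y" "\<lambda>y. DD (cc u y) (cyv u y) / d"])
  fix x assume "-b \<le> x" "x \<le> b"
  then have x: "\<bar>x\<bar> \<le> b" by simp
  show "((\<lambda>y. Dn u y) has_real_derivative DD (cc u x) (cyv u x) / d) (at x)" by (rule Dn_dy(1)[OF assms(1) x])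
  show "\<bar>DD (cc u x) (cyv u x) / d\<bar> \<le> Cy" by (rule Dn_dy(2)[OF assms(1) x])
qed (use assms in auto)

lemma Dn_ends:
  assumes "\<bar>y\<bar> \<le> b"
  shows "Dn a y \<ge> a/4" "Dn (-a) y \<le> -a/4"
proof -
  have b0: "\<bar>0::real\<bar> \<le> b" using b by simp
  have "Dn a 0 - Dn 0 0 \<ge> 3/4 * (a - 0)" using Dn_mono[OF b0, of 0 a] a by simp
  moreover have "Dn 0 0 - Dn (-a) 0 \<ge> 3/4 * (0 - (-a))" using Dn_mono[OF b0, of "-a" 0] a by simp
  moreover have "\<bar>Dn a y - Dn a 0\<bar> \<le> Cy * \<bar>y - 0\<bar>" using Dn_ylip[of a y 0] assms a b by simp
  moreover have "\<bar>Dn (-a) y - Dn (-a) 0\<bar> \<le> Cy * \<bar>y - 0\<bar>" using Dn_ylip[of "-a" y 0] assms a b by simp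
  moreover have "Cy * \<bar>y\<bar> \<le> a/2"
  proof -
    have "Cy * \<bar>y\<bar> \<le> Cy * b" using assms Cy by (simp add: mult_left_mono)
    also have "\<dots> \<le> b * (Cy + 1)" using b by (simp add: algebra_simps)
    finally show ?thesis using b by linarith
  qed
  ultimately show "Dn a y \<ge> a/4" "Dn (-a) y \<le> -a/4" using Dn00 by auto
qed

end

context boxs
begin

lemma Dn_cont_u: assumes "\<bar>y\<bar> \<le> b" shows "continuous_on {-a..a} (\<lambda>u. Dn u y)"
proof (rule continuous_at_imp_continuous_on, rule ballI)
  fix x assume "x \<in> {-a..a}"
  then have "\<bar>x\<bar> \<le> a" by auto
  from DERIV_isCont[OF Dn_du(1)[OF this assms]] show "isCont (\<lambda>u. Dn u y) x" .
qed

lemma h_ex: assumes "\<bar>y\<bar> \<le> b" shows "\<exists>u. -a \<le> u \<and> u \<le> a \<and> Dn u y = 0"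
proof -
  have "Dn (-a) y \<le> 0" "0 \<le> Dn a y" using Dn_ends[OF assms] a by auto
  then show ?thesis using IVT'[of "\<lambda>u. Dn u y" "-a" 0 a] Dn_cont_u[OF assms] a by auto
qed

lemma h_uniq:
  assumes "\<bar>y\<bar> \<le> b" "-a \<le> u1" "u1 \<le> a" "Dn u1 y = 0" "-a \<le> u2" "u2 \<le> a" "Dn u2 y = 0"
  shows "u1 = u2"
proof (rule ccontr)
  assume "u1 \<noteq> u2"
  then consider "u1 < u2" | "u2 < u1" by linarith
  then show False
  proof cases
    case 1 then show False using Dn_mono[OF assms(1), of u1 u2] assms by auto
  next
    case 2 then show False using Dn_mono[OF assms(1), of u2 u1] assms by auto
  qed
qed

definition "hf y = (THE u. -a \<le> u \<and> u \<le> a \<and> Dn u y = 0)"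

lemma h_prop:
  assumes "\<bar>y\<bar> \<le> b"
  shows "-a \<le> hf y" "hf y \<le> a" "Dn (hf y) y = 0" "\<bar>hf y\<bar> < a"
proof -
  have "\<exists>!u. -a \<le> u \<and> u \<le> a \<and> Dn u y = 0" using h_ex[OF assms] h_uniq[OF assms] by blast
  from theI'[OF this] show h: "-a \<le> hf y" "hf y \<le> a" "Dn (hf y) y = 0" unfolding hf_def by auto
  have "hf y \<noteq> a" "hf y \<noteq> -a" using h(3) Dn_ends[OF assms] a by auto
  then show "\<bar>hf y\<bar> < a" using h by auto
qed

lemma h_eq: "\<bar>y\<bar> \<le> b \<Longrightarrow> -a \<le> u \<Longrightarrow> u \<le> a \<Longrightarrow> Dn u y = 0 \<Longrightarrow> u = hf y"
  using h_uniq h_prop by blast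

lemma Dn_sep:
  assumes "\<bar>y\<bar> \<le> b" "-a \<le> u1" "u1 \<le> a" "-a \<le> u2" "u2 \<le> a"
  shows "3/4 * \<bar>u1 - u2\<bar> \<le> \<bar>Dn u1 y - Dn u2 y\<bar>"
proof (cases "u1 \<le> u2")
  case True then show ?thesis using Dn_mono[OF assms(1), of u1 u2] assms by auto
next
  case False then show ?thesis using Dn_mono[OF assms(1), of u2 u1] assms by auto
qed

lemma h_lip:
  assumes "\<bar>y1\<bar> \<le> b" "\<bar>y2\<bar> \<le> b"
  shows "\<bar>hf y1 - hf y2\<bar> \<le> 2 * Cy * \<bar>y1 - y2\<bar>"
proof -
  have s: "3/4 * \<bar>hf y1 - hf y2\<bar> \<le> \<bar>Dn (hf y1) y1 - Dn (hf y2) y1\<bar>"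
    by (rule Dn_sep[OF assms(1) h_prop(1)[OF assms(1)] h_prop(2)[OF assms(1)] h_prop(1)[OF assms(2)] h_prop(2)[OF assms(2)]])
  have "\<bar>Dn (hf y1) y1 - Dn (hf y2) y1\<bar> = \<bar>Dn (hf y2) y2 - Dn (hf y2) y1\<bar>"
    using h_prop(3)[OF assms(1)] h_prop(3)[OF assms(2)] by simp
  also have "\<dots> \<le> Cy * \<bar>y2 - y1\<bar>"
    using Dn_ylip[of "hf y2" y2 y1] h_prop[OF assms(2)] assms by simp
  finally have "3/4 * \<bar>hf y1 - hf y2\<bar> \<le> Cy * \<bar>y1 - y2\<bar>" using s by (simp add: abs_minus_commute)
  moreover have "Cy * \<bar>y1 - y2\<bar> \<ge> 0" using Cy by simp
  moreover have "\<And>X Y::real. 3/4 * X \<le> Y \<Longrightarrow> 0 \<le> Y \<Longrightarrow> X \<le> 2 * Y" by linarith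
  ultimately have "\<bar>hf y1 - hf y2\<bar> \<le> 2 * (Cy * \<bar>y1 - y2\<bar>)" by blast
  then show ?thesis by (simp add: mult.assoc)
qed

definition "Gm y = cc (hf y) y"

lemma tp_third0: "a1$3 = 0 \<Longrightarrow> b1$3 = 0 \<Longrightarrow> c1$3 = 0 \<Longrightarrow> tp a1 b1 c1 = 0"
  by (simp add: tp_expand)

lemma Gm_props:
  assumes y: "\<bar>y\<bar> \<le> b"
  shows "Gm y \<in> sphere2" "Gm y $2 = y" "Gm y \<bullet> E = hf y" "Gm y \<bullet> p > 0" "Gm y $3 \<ge> 0"
    "norm (Gm y - p) < r" "D (Gm y) = 0"
proof -
  have hb: "\<bar>hf y\<bar> \<le> a" using h_prop[OF y] by simp
  have s: "(hf y)^2 + y^2 \<le> 1/8" by (rule box(1)[OF hb y])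
  show "Gm y \<in> sphere2" unfolding Gm_def sphere2_def using cc_sphere[of "hf y" y] s by (simp add: norm_eq_sqrt_inner)
  show "Gm y $2 = y" by (simp add: Gm_def cc_comp)
  show "Gm y \<bullet> E = hf y" by (simp add: Gm_def cc_E)
  have n: "nn (hf y) y \<ge> 1/2" using nn_ge s by simp
  then show "Gm y \<bullet> p > 0" by (simp add: Gm_def cc_p)
  show "norm (Gm y - p) < r" unfolding Gm_def by (rule box(2)[OF hb y])
  have "Dn (hf y) y = 0" by (rule h_prop(3)[OF y])
  then show "D (Gm y) = 0" using dnz by (simp add: Dn_def Gm_def)
  show "Gm y $3 \<ge> 0"
  proof (cases "p$3 > 0")
    case True
    have "p$1^2 \<le> 1" using p13 by (metis le_add_same_cancel1 zero_le_power2)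
    then have p1: "\<bar>p$1\<bar> \<le> 1" by (simp add: abs_square_le_1)
    have "\<bar>hf y * p$1\<bar> \<le> a"
    proof -
      have "\<bar>hf y * p$1\<bar> = \<bar>hf y\<bar> * \<bar>p$1\<bar>" by (simp add: abs_mult)
      also have "\<dots> \<le> \<bar>hf y\<bar>" using p1 by (rule mult_left_le) simp
      finally show ?thesis using hb by simp
    qed
    moreover have "nn (hf y) y * p$3 \<ge> 1/2 * p$3" using n True by (simp add: mult_right_mono)
    moreover have "a \<le> p$3/4" using a(4) True by simp
    ultimately have "nn (hf y) y * p$3 + hf y * p$1 \<ge> 0" by linarith
    then show ?thesis by (simp add: Gm_def cc_comp)
  next
    case False
    then have p30: "p$3 = 0" using p3 by simp
    have "Dn 0 y = 0"
    proof -
      have c3: "cc 0 y $3 = 0" by (simp add: cc_comp p30)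
      show ?thesis unfolding Dn_def D_def using tp_third0[OF eU[OF c3] eV[OF c3] c3] by simp
    qed
    then have "hf y = 0" using h_eq[OF y, of 0] a by simp
    then show ?thesis by (simp add: Gm_def cc_comp p30)
  qed
qed

lemma BU0: "BU \<ge> 0" using rU r(1) by (metis abs_ge_zero diff_self norm_zero order_trans)
lemma BV0: "BV \<ge> 0" using rV r(1) by (metis abs_ge_zero diff_self norm_zero order_trans)

lemma lip_aux: "\<bar>f1 - f2\<bar> \<le> B * \<bar>h1 - h2\<bar> \<Longrightarrow> \<bar>f2 - f3\<bar> \<le> B * Y \<Longrightarrow> \<bar>h1 - h2\<bar> \<le> 2*Cy*Y \<Longrightarrow> B \<ge> 0
  \<Longrightarrow> \<bar>f1 - f3\<bar> \<le> B * (2*Cy + 1) * (Y::real)"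
proof -
  assume a1: "\<bar>f1 - f2\<bar> \<le> B * \<bar>h1 - h2\<bar>" and a2: "\<bar>f2 - f3\<bar> \<le> B * Y"
    and a3: "\<bar>h1 - h2\<bar> \<le> 2*Cy*Y" and B: "B \<ge> 0"
  have "B * \<bar>h1 - h2\<bar> \<le> B * (2*Cy*Y)" using a3 B by (rule mult_left_mono)
  moreover have "B * (2*Cy + 1) * Y = B * (2*Cy*Y) + B * Y" by (simp add: algebra_simps)
  moreover have "\<bar>f1 - f3\<bar> \<le> \<bar>f1 - f2\<bar> + \<bar>f2 - f3\<bar>" by linarith
  ultimately show ?thesis using a1 a2 by linarith
qed

lemma U2_lip:
  assumes "\<bar>y1\<bar> \<le> b" "\<bar>y2\<bar> \<le> b"
  shows "\<bar>U (Gm y1) $2 - U (Gm y2) $2\<bar> \<le> BU * (2*Cy + 1) * \<bar>y1 - y2\<bar>"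
proof -
  have h1: "-a \<le> hf y1" "hf y1 \<le> a" and h2: "-a \<le> hf y2" "hf y2 \<le> a" using h_prop assms by auto
  have A: "\<bar>U (cc (hf y1) y1) $2 - U (cc (hf y2) y1) $2\<bar> \<le> BU * \<bar>hf y1 - hf y2\<bar>"
  proof (rule deriv_lip[of "-a" a "\<lambda>u. U (cc u y1) $2" "\<lambda>u. DU (cc u y1) (cu u y1) $2"])
    fix x assume "-a \<le> x" "x \<le> a"
    then have x: "\<bar>x\<bar> \<le> a" by simp
    show "((\<lambda>u. U (cc u y1) $2) has_real_derivative DU (cc x y1) (cu x y1) $2) (at x)" by (rule U2_du(1)[OF x assms(1)])
    show "\<bar>DU (cc x y1) (cu x y1) $2\<bar> \<le> BU" by (rule U2_du(2)[OF x assms(1)])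
  qed (use h1 h2 in auto)
  have hb: "\<bar>hf y2\<bar> \<le> a" using h2 by simp
  have B: "\<bar>U (cc (hf y2) y1) $2 - U (cc (hf y2) y2) $2\<bar> \<le> BU * \<bar>y1 - y2\<bar>"
  proof (rule deriv_lip[of "-b" b "\<lambda>y. U (cc (hf y2) y) $2" "\<lambda>y. DU (cc (hf y2) y) (cyv (hf y2) y) $2"])
    fix x assume "-b \<le> x" "x \<le> b"
    then have x: "\<bar>x\<bar> \<le> b" by simp
    show "((\<lambda>y. U (cc (hf y2) y) $2) has_real_derivative DU (cc (hf y2) x) (cyv (hf y2) x) $2) (at x)" by (rule U2_dy(1)[OF hb x])
    show "\<bar>DU (cc (hf y2) x) (cyv (hf y2) x) $2\<bar> \<le> BU" by (rule U2_dy(2)[OF hb x])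
  qed (use assms in auto)
  show ?thesis unfolding Gm_def by (rule lip_aux[OF A B h_lip[OF assms] BU0])
qed

lemma V2_lip:
  assumes "\<bar>y1\<bar> \<le> b" "\<bar>y2\<bar> \<le> b"
  shows "\<bar>V (Gm y1) $2 - V (Gm y2) $2\<bar> \<le> BV * (2*Cy + 1) * \<bar>y1 - y2\<bar>"
proof -
  have h1: "-a \<le> hf y1" "hf y1 \<le> a" and h2: "-a \<le> hf y2" "hf y2 \<le> a" using h_prop assms by auto
  have A: "\<bar>V (cc (hf y1) y1) $2 - V (cc (hf y2) y1) $2\<bar> \<le> BV * \<bar>hf y1 - hf y2\<bar>"
  proof (rule deriv_lip[of "-a" a "\<lambda>u. V (cc u y1) $2" "\<lambda>u. DV (cc u y1) (cu u y1) $2"])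
    fix x assume "-a \<le> x" "x \<le> a"
    then have x: "\<bar>x\<bar> \<le> a" by simp
    show "((\<lambda>u. V (cc u y1) $2) has_real_derivative DV (cc x y1) (cu x y1) $2) (at x)" by (rule V2_du(1)[OF x assms(1)])
    show "\<bar>DV (cc x y1) (cu x y1) $2\<bar> \<le> BV" by (rule V2_du(2)[OF x assms(1)])
  qed (use h1 h2 in auto)
  have hb: "\<bar>hf y2\<bar> \<le> a" using h2 by simp
  have B: "\<bar>V (cc (hf y2) y1) $2 - V (cc (hf y2) y2) $2\<bar> \<le> BV * \<bar>y1 - y2\<bar>"
  proof (rule deriv_lip[of "-b" b "\<lambda>y. V (cc (hf y2) y) $2" "\<lambda>y. DV (cc (hf y2) y) (cyv (hf y2) y) $2"])
    fix x assume "-b \<le> x" "x \<le> b"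
    then have x: "\<bar>x\<bar> \<le> b" by simp
    show "((\<lambda>y. V (cc (hf y2) y) $2) has_real_derivative DV (cc (hf y2) x) (cyv (hf y2) x) $2) (at x)" by (rule V2_dy(1)[OF hb x])
    show "\<bar>DV (cc (hf y2) x) (cyv (hf y2) x) $2\<bar> \<le> BV" by (rule V2_dy(2)[OF hb x])
  qed (use assms in auto)
  show ?thesis unfolding Gm_def by (rule lip_aux[OF A B h_lip[OF assms] BV0])
qed

lemma hf_cont: "continuous_on {-b..b} hf"
proof (rule lipschitz_on_continuous_on)
  show "(2*Cy)-lipschitz_on {-b..b} hf"
    using h_lip Cy by (intro lipschitz_onI) (auto simp: dist_real_def)
qed

lemma Gm_cont: "continuous_on {-b..b} Gm"
proof -
  have "continuous_on {-b..b} (\<lambda>y. (hf y, y))" by (intro continuous_intros hf_cont)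
  moreover have "(\<lambda>y. (hf y, y)) ` {-b..b} \<subseteq> {(u,y). u^2 + y^2 < 1}"
  proof
    fix z assume "z \<in> (\<lambda>y. (hf y, y)) ` {-b..b}"
    then obtain y where y: "-b \<le> y" "y \<le> b" "z = (hf y, y)" by auto
    then have yb: "\<bar>y\<bar> \<le> b" by simp
    have "\<bar>hf y\<bar> \<le> a" using h_prop(4)[OF yb] by simp
    from in_disc[OF this yb] show "z \<in> {(u,y). u^2 + y^2 < 1}" using y by simp
  qed
  ultimately show ?thesis
    unfolding Gm_def using continuous_on_compose2[OF cc_cont] by fastforce
qed

lemma rho_pos: "q \<bullet> p > 0 \<Longrightarrow> rho q > 0"
proof -
  assume "q \<bullet> p > 0"
  then have "q$1*p$1 + q$3*p$3 > 0" by (simp add: inner3 p2)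
  then have "\<not> (q$1 = 0 \<and> q$3 = 0)" by auto
  then have "q$1^2 + q$3^2 > 0" by (auto simp: add_pos_nonneg add_nonneg_pos)
  then show ?thesis by (simp add: rho_def)
qed

end

lemma sgn_aux:
  fixes s v x z :: real
  assumes "s * v < 0" "\<bar>x - s\<bar> < \<bar>s\<bar>/2" "\<bar>z - v\<bar> < \<bar>v\<bar>/2"
  shows "x * z < 0" "\<bar>x - z\<bar> \<ge> (\<bar>s\<bar> + \<bar>v\<bar>)/2" "s > 0 \<longrightarrow> x > 0" "s < 0 \<longrightarrow> x < 0"
    "v > 0 \<longrightarrow> z > 0" "v < 0 \<longrightarrow> z < 0"
proof -
  have c: "(s > 0 \<and> v < 0) \<or> (s < 0 \<and> v > 0)" using assms(1) by (auto simp: mult_less_0_iff)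
  have a1: "-\<bar>x - s\<bar> \<le> x - s" "x - s \<le> \<bar>x - s\<bar>" "-\<bar>z - v\<bar> \<le> z - v" "z - v \<le> \<bar>z - v\<bar>" by simp_all
  show i1: "s > 0 \<longrightarrow> x > 0" "s < 0 \<longrightarrow> x < 0" using assms(2) a1 by auto
  show i2: "v > 0 \<longrightarrow> z > 0" "v < 0 \<longrightarrow> z < 0" using assms(3) a1 by auto
  show "x * z < 0" using c i1 i2 by (auto simp: mult_less_0_iff)
  have a2: "x - z \<le> \<bar>x - z\<bar>" "z - x \<le> \<bar>x - z\<bar>" by simp_all
  show "\<bar>x - z\<bar> \<ge> (\<bar>s\<bar> + \<bar>v\<bar>)/2" using c assms(2,3) a1 a2 by auto
qed

lemma uniq_arith:
  fixes D P c e cw Wp W F Vp Vv L1 L2 :: real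
  assumes "D > 0" "P \<ge> c * D / e" "c > 0" "e > 0" "\<bar>Wp\<bar> \<ge> cw" "cw > 0"
    "P * Wp + F * (Wp - W) + (Vp - Vv) = 0" "0 \<le> F" "F \<le> 1"
    "\<bar>Wp - W\<bar> \<le> L1 * D" "\<bar>Vp - Vv\<bar> \<le> L2 * D" "L1 \<ge> 0" "L2 \<ge> 0"
    "e \<le> c * cw / (2 * (L1 + L2 + 1))"
  shows False
proof -
  have P0: "P > 0" using assms(1-4) by (smt (verit) divide_pos_pos mult_pos_pos)
  have "\<bar>P * Wp\<bar> = P * \<bar>Wp\<bar>" using P0 by (simp add: abs_mult)
  also have "\<dots> \<ge> (c * D / e) * cw" using assms(2,5,6) P0 by (meson mult_mono less_imp_le order_trans divide_nonneg_pos mult_nonneg_nonneg assms(1,3,4))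
  finally have l: "\<bar>P * Wp\<bar> \<ge> c * D / e * cw" .
  have "\<bar>F * (Wp - W)\<bar> \<le> \<bar>Wp - W\<bar>" using assms(8,9) by (simp add: abs_mult mult_left_le_one_le)
  then have "\<bar>F * (Wp - W) + (Vp - Vv)\<bar> \<le> L1 * D + L2 * D" using assms(10,11) by linarith
  moreover have "\<bar>P * Wp\<bar> = \<bar>F * (Wp - W) + (Vp - Vv)\<bar>" using assms(7) by (simp add: abs_minus_commute eq_neg_iff_add_eq_0[symmetric] abs_minus_cancel)
  ultimately have u: "c * D / e * cw \<le> (L1 + L2) * D" using l by (simp add: algebra_simps)
  have "2 * (L1 + L2 + 1) * e \<le> c * cw" using assms(14) assms(12,13) by (simp add: le_divide_eq mult.commute)
  then have "2 * (L1 + L2 + 1) * e * D \<le> c * cw * D" using assms(1) by (simp add: mult_right_mono)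
  moreover have "c * D / e * cw * e = c * cw * D" using assms(4) by simp
  moreover have "(L1 + L2) * D * e < 2 * (L1 + L2 + 1) * e * D"
  proof -
    have "(L1 + L2 + 2) * (e * D) > 0" using assms(1,4,12,13) by (intro mult_pos_pos) auto
    moreover have "2 * (L1 + L2 + 1) * e * D = (L1 + L2) * D * e + (L1 + L2 + 2) * (e * D)"
      by (simp add: algebra_simps)
    ultimately show ?thesis by linarith
  qed
  moreover have "c * D / e * cw * e \<le> (L1 + L2) * D * e" by (rule mult_right_mono[OF u]) (use assms(4) in simp)
  ultimately show False by linarith
qed

context boxs
begin

definition "Vn = {q \<in> upper_hemi. \<bar>q \<bullet> E\<bar> < a \<and> \<bar>q$2\<bar> < b \<and> q \<bullet> p > 0}"

lemma Vn_open: "openin (top_of_set upper_hemi) Vn"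
proof -
  have "open {q::real^3. \<bar>q \<bullet> E\<bar> < a \<and> \<bar>q$2\<bar> < b \<and> q \<bullet> p > 0}"
    by (intro open_Collect_conj open_Collect_less continuous_intros)
  moreover have "Vn = upper_hemi \<inter> {q::real^3. \<bar>q \<bullet> E\<bar> < a \<and> \<bar>q$2\<bar> < b \<and> q \<bullet> p > 0}"
    unfolding Vn_def by auto
  ultimately show ?thesis by (auto simp: openin_open)
qed

lemma p_Vn: "p \<in> Vn"
  using pS p3 pp a b unfolding Vn_def upper_hemi_def by (simp add: p2 E_def inner3)

lemma near:
  assumes "norm (q - p) < r"
  shows "U q $2 * V q $2 < 0" "\<bar>U q $2 - V q $2\<bar> \<ge> cw" "V q $2 \<noteq> 0" "U q $2 \<noteq> 0"
    "U p $2 > 0 \<longrightarrow> U q $2 > 0" "U p $2 < 0 \<longrightarrow> U q $2 < 0"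
    "V p $2 > 0 \<longrightarrow> V q $2 > 0" "V p $2 < 0 \<longrightarrow> V q $2 < 0"
  using sgn_aux[OF sg, of "U q $2" "V q $2"] rsgn assms cw by auto

lemma Wf_comp2: "Wf \<epsilon> q $2 = \<phi> (q$2/\<epsilon>) * (U q $2 - V q $2) + V q $2"
  by (simp add: Wf_def algebra_simps)

lemma sing_char:
  assumes eps: "\<epsilon> > 0" and q: "q \<in> Vn" "sing_point_S2 (Wf \<epsilon>) q"
  shows "\<bar>q$2\<bar> < b" "q = Gm (q$2)" "norm (q - p) < r"
    "\<phi> (q$2/\<epsilon>) * (U q $2 - V q $2) + V q $2 = 0" "\<bar>\<phi> (q$2/\<epsilon>) - ts\<bar> < \<delta>t" "rho q > 0"
proof -
  have qS: "q \<in> sphere2" and W0: "Wf \<epsilon> q = 0" using q(2) by (auto simp: sing_point_S2_def)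
  have qq: "q \<bullet> q = 1" using qS by (simp add: sphere2_def norm_eq_1)
  have qV: "\<bar>q \<bullet> E\<bar> < a" "\<bar>q$2\<bar> < b" "q \<bullet> p > 0" using q(1) by (auto simp: Vn_def)
  then show "\<bar>q$2\<bar> < b" "rho q > 0" using rho_pos by auto
  have dec: "q = cc (q \<bullet> E) (q$2)" by (rule cc_decomp(1)[OF qq qV(3)])
  have ub: "\<bar>q \<bullet> E\<bar> \<le> a" "\<bar>q$2\<bar> \<le> b" using qV by auto
  show nr: "norm (q - p) < r" using box(2)[OF ub] dec by simp
  define t where "t = \<phi> (q$2/\<epsilon>)"
  show G0: "\<phi> (q$2/\<epsilon>) * (U q $2 - V q $2) + V q $2 = 0" using W0 Wf_comp2[of \<epsilon> q] by simp
  have nz: "V q $2 - U q $2 \<noteq> 0" using near(1)[OF nr] by auto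
  have "t = V q $2 / (V q $2 - U q $2)" using G0 nz unfolding t_def by (simp add: field_simps)
  then show "\<bar>\<phi> (q$2/\<epsilon>) - ts\<bar> < \<delta>t" using rrat nr unfolding t_def by simp
  have t0: "t \<noteq> 0" using G0 near(3)[OF nr] unfolding t_def by auto
  have eq: "(1 - t) *\<^sub>R V q + t *\<^sub>R U q = 0" using W0 unfolding Wf_def t_def by simp
  have "0 = tp ((1 - t) *\<^sub>R V q + t *\<^sub>R U q) (V q) q" by (simp only: eq) (simp add: tp_expand)
  also have "\<dots> = t * D q" by (simp add: tp_lin1 tp_same D_def)
  finally have "t * D q = 0" by simp
  then have "D q = 0" using t0 by simp
  then have "Dn (q \<bullet> E) (q$2) = 0" using dec by (simp add: Dn_def)
  then have "q \<bullet> E = hf (q$2)" using h_eq[OF ub(2)] ub(1) by auto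
  then show "q = Gm (q$2)" using dec by (simp add: Gm_def)
qed

lemma cw_pos: "cw > 0" using sg cw by (auto simp: mult_less_0_iff)

lemma ex_sing:
  assumes eps: "0 < \<epsilon>" "\<epsilon> \<le> b"
  shows "\<exists>q. q \<in> Vn \<and> sing_point_S2 (Wf \<epsilon>) q"
proof -
  define G where "G y = \<phi> (y/\<epsilon>) * (U (Gm y) $2 - V (Gm y) $2) + V (Gm y) $2" for y
  have cU': "continuous_on {-b..b} (\<lambda>y. U (Gm y))"
    by (rule continuous_on_compose2[OF U_cont Gm_cont]) auto
  have cV': "continuous_on {-b..b} (\<lambda>y. V (Gm y))"
    by (rule continuous_on_compose2[OF V_cont Gm_cont]) auto
  have cP: "continuous_on {-b..b} (\<lambda>y. \<phi> (y/\<epsilon>))"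
    by (rule continuous_on_compose2[OF tf_cont[OF tf]]) (use eps in \<open>auto intro!: continuous_intros\<close>)
  have Gc: "continuous_on {-b..b} G"
    unfolding G_def by (intro continuous_intros cU' cV' cP)
  have z: "\<forall>t \<le> -1. \<phi> t = 0" and o: "\<forall>t \<ge> 1. \<phi> t = 1" using tf unfolding transition_function_def by auto
  have "b/\<epsilon> \<ge> 1" using eps by (simp add: le_divide_eq)
  then have ph: "\<phi> (-b/\<epsilon>) = 0" "\<phi> (b/\<epsilon>) = 1" using z o by auto
  have bb: "\<bar>-b\<bar> \<le> b" "\<bar>b\<bar> \<le> b" using b by auto
  have G1: "G (-b) = V (Gm (-b)) $2" "G b = U (Gm b) $2" unfolding G_def using ph by auto
  have n1: "norm (Gm (-b) - p) < r" "norm (Gm b - p) < r" using Gm_props(6)[OF bb(1)] Gm_props(6)[OF bb(2)] by auto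
  obtain y where y: "-b \<le> y" "y \<le> b" "G y = 0"
  proof (cases "U p $2 > 0")
    case True
    then have "V p $2 < 0" using sg by (auto simp: mult_less_0_iff)
    then have "G (-b) \<le> 0" "0 \<le> G b" using G1 near(5,8)[OF n1(1)] near(5)[OF n1(2)] True by auto
    then show ?thesis using IVT'[of G "-b" 0 b] Gc b that by auto
  next
    case False
    then have "U p $2 < 0" "V p $2 > 0" using sg by (auto simp: mult_less_0_iff)
    then have "G b \<le> 0" "0 \<le> G (-b)" using G1 near(6)[OF n1(2)] near(7)[OF n1(1)] by auto
    then show ?thesis using IVT2'[of G b 0 "-b"] Gc b that by auto
  qed
  have "y \<noteq> b" "y \<noteq> -b" using y G1 near(3,4) n1 by auto
  then have yb: "\<bar>y\<bar> < b" "\<bar>y\<bar> \<le> b" using y by auto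
  define q where "q = Gm y"
  have qS: "q \<in> sphere2" and q2: "q$2 = y" and qE: "q \<bullet> E = hf y" and qp: "q \<bullet> p > 0" and q3: "q$3 \<ge> 0"
    and qr: "norm (q - p) < r" and Dq: "D q = 0"
    using Gm_props[OF yb(2)] unfolding q_def by auto
  have "q \<in> Vn" unfolding Vn_def upper_hemi_def using qS q2 qE qp q3 yb h_prop(4)[OF yb(2)] by auto
  moreover have "Wf \<epsilon> q = 0"
  proof (rule zero_lemma)
    show "q \<bullet> q = 1" using qS by (simp add: sphere2_def norm_eq_1)
    show "0 < q$1^2 + q$3^2" using rho_pos[OF qp] by (simp add: rho_def)
    show "Wf \<epsilon> q \<bullet> q = 0" using tU[OF qS] tV[OF qS] by (simp add: Wf_def inner_commute[of _ q] inner_add_right)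
    show "V q \<bullet> q = 0" using tV[OF qS] by (simp add: inner_commute)
    show "Wf \<epsilon> q $ 2 = 0" using y(3) Gm_props(2)[OF yb(2)] unfolding Wf_comp2 G_def q_def by simp
    show "V q $ 2 \<noteq> 0" using near(3)[OF qr] .
    show "tp (Wf \<epsilon> q) (V q) q = 0" unfolding Wf_def tp_lin1 tp_same using Dq by (simp add: D_def)
  qed
  ultimately show ?thesis using qS by (auto simp: sing_point_S2_def)
qed

definition "LU = BU * (2*Cy + 1)"
definition "LV = BV * (2*Cy + 1)"

lemma LU0: "LU \<ge> 0" unfolding LU_def using BU0 Cy by simp
lemma LV0: "LV \<ge> 0" unfolding LV_def using BV0 Cy by simp

lemma phi_incr:
  assumes "s1 \<le> s2" "\<bar>\<phi> s1 - ts\<bar> < \<delta>t" "\<bar>\<phi> s2 - ts\<bar> < \<delta>t"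
  shows "\<phi> s2 - \<phi> s1 \<ge> c\<phi> * (s2 - s1)"
proof (rule deriv_lower[of s1 s2 \<phi> "deriv \<phi>"])
  fix x assume x: "s1 \<le> x" "x \<le> s2"
  show "(\<phi> has_real_derivative deriv \<phi> x) (at x)" by (rule tf_deriv[OF tf])
  have "\<phi> s1 \<le> \<phi> x" "\<phi> x \<le> \<phi> s2" using tf_mono[OF tf] x by auto
  then have "ts - \<delta>t \<le> \<phi> x \<and> \<phi> x \<le> ts + \<delta>t" using assms(2,3) by auto
  then show "c\<phi> \<le> deriv \<phi> x" using cphi(2) by blast
qed (use assms in auto)

lemma uniq_lt:
  assumes eps: "0 < \<epsilon>" "\<epsilon> \<le> c\<phi> * cw / (2 * ((LU + LV) + LV + 1))"
    and q: "q \<in> Vn" "sing_point_S2 (Wf \<epsilon>) q" and q': "q' \<in> Vn" "sing_point_S2 (Wf \<epsilon>) q'"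
    and lt: "q$2 < q'$2"
  shows False
proof -
  note c = sing_char[OF eps(1) q] and c' = sing_char[OF eps(1) q']
  define y where "y = q$2"
  define y' where "y' = q'$2"
  have yb: "\<bar>y\<bar> \<le> b" "\<bar>y'\<bar> \<le> b" using c(1) c'(1) unfolding y_def y'_def by auto
  have "\<phi> (y'/\<epsilon>) - \<phi> (y/\<epsilon>) \<ge> c\<phi> * (y'/\<epsilon> - y/\<epsilon>)"
    by (rule phi_incr) (use lt eps c(5) c'(5) in \<open>auto simp: y_def y'_def divide_right_mono\<close>)
  moreover have "c\<phi> * (y'/\<epsilon> - y/\<epsilon>) = c\<phi> * (y' - y) / \<epsilon>" by (simp add: diff_divide_distrib[symmetric])
  ultimately have P: "\<phi> (y'/\<epsilon>) - \<phi> (y/\<epsilon>) \<ge> c\<phi> * (y' - y) / \<epsilon>" by simp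
  have qq: "q = Gm y" "q' = Gm y'" using c(2) c'(2) unfolding y_def y'_def by auto
  have lu: "\<bar>U q' $2 - U q $2\<bar> \<le> LU * (y' - y)"
    using U2_lip[OF yb(2) yb(1)] lt qq unfolding LU_def y_def y'_def by simp
  have lv: "\<bar>V q' $2 - V q $2\<bar> \<le> LV * (y' - y)"
    using V2_lip[OF yb(2) yb(1)] lt qq unfolding LV_def y_def y'_def by simp
  have lw: "\<bar>(U q' $2 - V q' $2) - (U q $2 - V q $2)\<bar> \<le> (LU + LV) * (y' - y)"
  proof -
    have "\<bar>(U q' $2 - V q' $2) - (U q $2 - V q $2)\<bar> \<le> \<bar>U q' $2 - U q $2\<bar> + \<bar>V q' $2 - V q $2\<bar>" by linarith
    then show ?thesis using lu lv by (simp add: distrib_right)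
  qed
  have eq: "(\<phi> (y'/\<epsilon>) - \<phi> (y/\<epsilon>)) * (U q' $2 - V q' $2) + \<phi> (y/\<epsilon>) * ((U q' $2 - V q' $2) - (U q $2 - V q $2))
      + (V q' $2 - V q $2) = 0"
  proof -
    have "\<phi> (y'/\<epsilon>) * (U q' $2 - V q' $2) + V q' $2 = 0" "\<phi> (y/\<epsilon>) * (U q $2 - V q $2) + V q $2 = 0"
      using c(4) c'(4) unfolding y_def y'_def by auto
    then show ?thesis by (simp add: algebra_simps)
  qed
  show False
  proof (rule uniq_arith[OF _ P cphi(1) eps(1) near(2)[OF c'(3)] cw_pos eq _ _ lw lv _ LV0 eps(2)])
    show "0 < y' - y" using lt unfolding y_def y'_def by simp
    show "0 \<le> \<phi> (y/\<epsilon>)" "\<phi> (y/\<epsilon>) \<le> 1" using tf_range[OF tf] by auto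
    show "0 \<le> LU + LV" using LU0 LV0 by simp
  qed
qed

lemma uniq_sing:
  assumes eps: "0 < \<epsilon>" "\<epsilon> \<le> c\<phi> * cw / (2 * ((LU + LV) + LV + 1))"
    and q: "q \<in> Vn" "sing_point_S2 (Wf \<epsilon>) q" and q': "q' \<in> Vn" "sing_point_S2 (Wf \<epsilon>) q'"
  shows "q = q'"
proof -
  have "q$2 = q'$2"
  proof (rule ccontr)
    assume "q$2 \<noteq> q'$2"
    then consider "q$2 < q'$2" | "q'$2 < q$2" by linarith
    then show False
    proof cases
      case 1 then show False using uniq_lt[OF eps q q'] by simp
    next
      case 2 then show False using uniq_lt[OF eps q' q] by simp
    qed
  qed
  then show ?thesis using sing_char(2)[OF eps(1) q] sing_char(2)[OF eps(1) q'] by metis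
qed

definition "A0 = 8*Mb/cw + 48*\<bar>d\<bar>/cw^2 + 4*Mb^2/\<bar>d\<bar> + 1"

lemma A0_pos: "A0 > 0"
  using Hk(2) cw_pos dnz unfolding A0_def by (simp add: add_nonneg_pos)

lemma hyp_sing:
  assumes eps: "0 < \<epsilon>" "\<epsilon> \<le> c\<phi> / A0"
    and q: "q \<in> Vn" "sing_point_S2 (Wf \<epsilon>) q"
  shows "hyperbolic_saddle (Wf \<epsilon>) q \<or> hyperbolic_node (Wf \<epsilon>) q"
proof -
  note c = sing_char[OF eps(1) q]
  have qS: "q \<in> sphere2" and W0: "Wf \<epsilon> q = 0" using q(2) by (auto simp: sing_point_S2_def)
  have n: "norm (q - p) < rK" using c(3) r by simp
  have t: "\<bar>\<phi> (q$2/\<epsilon>) - ts\<bar> < rK" using c(5) dt by simp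
  note H = Hk(3)[rule_format, OF n t]
  have "ts - \<delta>t \<le> \<phi> (q$2/\<epsilon>) \<and> \<phi> (q$2/\<epsilon>) \<le> ts + \<delta>t" using c(5) by auto
  then have dphi: "deriv \<phi> (q$2/\<epsilon>) \<ge> c\<phi>" using cphi(2) by blast
  have "A0 \<le> c\<phi> / \<epsilon>" using eps A0_pos by (simp add: le_divide_eq mult.commute)
  also have "\<dots> \<le> deriv \<phi> (q$2/\<epsilon>) / \<epsilon>" using dphi eps by (simp add: divide_right_mono)
  finally have A: "deriv \<phi> (q$2/\<epsilon>) / \<epsilon> \<ge> A0" .
  show ?thesis
    by (rule hyp_at[OF qS c(6) W0 eps(1) _ _ _ _ _ refl near(2)[OF c(3)] cw_pos A[unfolded A0_def]])
      (use H in auto)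
qed

lemma box_main:
  "\<exists>\<epsilon>0>0. \<forall>\<epsilon>. 0 < \<epsilon> \<and> \<epsilon> \<le> \<epsilon>0 \<longrightarrow>
     (\<exists>!q. q \<in> Vn \<and> sing_point_S2 (Wf \<epsilon>) q) \<and>
     (\<forall>q. q \<in> Vn \<and> sing_point_S2 (Wf \<epsilon>) q \<longrightarrow> hyperbolic_saddle (Wf \<epsilon>) q \<or> hyperbolic_node (Wf \<epsilon>) q)"
proof -
  define e0 where "e0 = min b (min (c\<phi> * cw / (2 * ((LU + LV) + LV + 1))) (c\<phi> / A0))"
  have "2 * ((LU + LV) + LV + 1) > 0" using LU0 LV0 by simp
  then have "e0 > 0" unfolding e0_def using b(1) cphi(1) cw_pos A0_pos by simp
  moreover have "\<forall>\<epsilon>. 0 < \<epsilon> \<and> \<epsilon> \<le> e0 \<longrightarrow>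
     (\<exists>!q. q \<in> Vn \<and> sing_point_S2 (Wf \<epsilon>) q) \<and>
     (\<forall>q. q \<in> Vn \<and> sing_point_S2 (Wf \<epsilon>) q \<longrightarrow> hyperbolic_saddle (Wf \<epsilon>) q \<or> hyperbolic_node (Wf \<epsilon>) q)"
  proof (intro allI impI)
    fix \<epsilon> assume e: "0 < \<epsilon> \<and> \<epsilon> \<le> e0"
    then have e1: "0 < \<epsilon>" "\<epsilon> \<le> b" "\<epsilon> \<le> c\<phi> * cw / (2 * ((LU + LV) + LV + 1))" "\<epsilon> \<le> c\<phi> / A0"
      unfolding e0_def by auto
    have "\<exists>!q. q \<in> Vn \<and> sing_point_S2 (Wf \<epsilon>) q"
      using ex_sing[OF e1(1,2)] uniq_sing[OF e1(1,3)] by blast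
    moreover have "\<forall>q. q \<in> Vn \<and> sing_point_S2 (Wf \<epsilon>) q \<longrightarrow> hyperbolic_saddle (Wf \<epsilon>) q \<or> hyperbolic_node (Wf \<epsilon>) q"
      using hyp_sing[OF e1(1,4)] by blast
    ultimately show "(\<exists>!q. q \<in> Vn \<and> sing_point_S2 (Wf \<epsilon>) q) \<and>
     (\<forall>q. q \<in> Vn \<and> sing_point_S2 (Wf \<epsilon>) q \<longrightarrow> hyperbolic_saddle (Wf \<epsilon>) q \<or> hyperbolic_node (Wf \<epsilon>) q)" ..
  qed
  ultimately show ?thesis by blast
qed

end

context msetting
begin

lemma local_main:
  "\<exists>Vn \<epsilon>0. openin (top_of_set upper_hemi) Vn \<and> p \<in> Vn \<and> \<epsilon>0 > 0 \<and>
     (\<forall>\<epsilon>. 0 < \<epsilon> \<and> \<epsilon> \<le> \<epsilon>0 \<longrightarrow>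
        (\<exists>!q. q \<in> Vn \<and> sing_point_S2 (Wf \<epsilon>) q) \<and>
        (\<forall>q. q \<in> Vn \<and> sing_point_S2 (Wf \<epsilon>) q \<longrightarrow> hyperbolic_saddle (Wf \<epsilon>) q \<or> hyperbolic_node (Wf \<epsilon>) q))"
proof -
  obtain rK Mb where Hk: "rK > 0" "Mb \<ge> 0" "\<forall>q t. norm (q - p) < rK \<longrightarrow> \<bar>t - ts\<bar> < rK \<longrightarrow>
      \<bar>m11 q t\<bar> \<le> Mb \<and> \<bar>m12 q t\<bar> \<le> Mb \<and> \<bar>m21 q t\<bar> \<le> Mb \<and> \<bar>m22 q t\<bar> \<le> Mb \<and>
      \<bar>Kf q t - d\<bar> \<le> \<bar>d\<bar>/2"
    using hyp_consts by blast
  define \<delta>t where "\<delta>t = min (rK/2) (min (ts/2) ((1-ts)/2))"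
  have dt0: "\<delta>t \<le> rK/2" "\<delta>t \<le> ts/2" "\<delta>t \<le> (1-ts)/2"
    unfolding \<delta>t_def by (simp_all only: min.cobounded1 min.coboundedI2)
  have "0 < \<delta>t" using Hk(1) ts_range unfolding \<delta>t_def by simp
  note dt0 = dt0 this
  have "ts + \<delta>t < 1"
  proof -
    have "ts + \<delta>t \<le> ts + (1 - ts)/2" using dt0(3) by simp
    also have "\<dots> < 1" using ts_range(2) by (simp add: field_simps)
    finally show ?thesis .
  qed
  then have dt: "0 < \<delta>t" "\<delta>t \<le> rK/2" "0 < ts - \<delta>t" "ts + \<delta>t < 1"
    using dt0 ts_range by linarith+
  obtain c\<phi> where cphi: "c\<phi> > 0" "\<forall>s. ts - \<delta>t \<le> \<phi> s \<and> \<phi> s \<le> ts + \<delta>t \<longrightarrow> c\<phi> \<le> deriv \<phi> s"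
    using tf_lower[OF tf dt(3,4)] by blast
  have s0: "U p $2 \<noteq> 0" "V p $2 \<noteq> 0" using sg by auto
  have d4: "\<bar>d\<bar>/4 > 0" using dnz by simp
  obtain r1 where r1: "r1 > 0" "\<forall>q h. norm (q - p) < r1 \<longrightarrow> norm (h - E) < r1 \<longrightarrow> \<bar>DD q h - DD p E\<bar> < \<bar>d\<bar>/4"
    using cont2_eps[OF DD_cont d4, of p E] by blast
  obtain r2 where r2: "r2 > 0" "\<forall>q h. norm (q - p) < r2 \<longrightarrow> norm (h - ey) < r2 \<longrightarrow> \<bar>DD q h - DD p ey\<bar> < 1"
    using cont2_eps[OF DD_cont, of 1 p ey] by auto
  obtain r3 where r3: "r3 > 0" "\<forall>q h. norm (q - p) < r3 \<longrightarrow> norm (h - E) < r3 \<longrightarrow> \<bar>DU q h $2 - DU p E $2\<bar> < 1"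
    using cont2_eps[where F="\<lambda>q h. DU q h $ 2", OF cUn, of 1 p E] by auto
  obtain r4 where r4: "r4 > 0" "\<forall>q h. norm (q - p) < r4 \<longrightarrow> norm (h - ey) < r4 \<longrightarrow> \<bar>DU q h $2 - DU p ey $2\<bar> < 1"
    using cont2_eps[where F="\<lambda>q h. DU q h $ 2", OF cUn, of 1 p ey] by auto
  obtain r5 where r5: "r5 > 0" "\<forall>q h. norm (q - p) < r5 \<longrightarrow> norm (h - E) < r5 \<longrightarrow> \<bar>DV q h $2 - DV p E $2\<bar> < 1"
    using cont2_eps[where F="\<lambda>q h. DV q h $ 2", OF cVn, of 1 p E] by auto
  obtain r6 where r6: "r6 > 0" "\<forall>q h. norm (q - p) < r6 \<longrightarrow> norm (h - ey) < r6 \<longrightarrow> \<bar>DV q h $2 - DV p ey $2\<bar> < 1"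
    using cont2_eps[where F="\<lambda>q h. DV q h $ 2", OF cVn, of 1 p ey] by auto
  have u0: "\<bar>U p $2\<bar>/2 > 0" "\<bar>V p $2\<bar>/2 > 0" using s0 by auto
  obtain r7 where r7: "r7 > 0" "\<forall>q. norm (q - p) < r7 \<longrightarrow> \<bar>U q $2 - U p $2\<bar> < \<bar>U p $2\<bar>/2"
    using cont1_eps[OF U2_cont u0(1)] by auto
  obtain r8 where r8: "r8 > 0" "\<forall>q. norm (q - p) < r8 \<longrightarrow> \<bar>V q $2 - V p $2\<bar> < \<bar>V p $2\<bar>/2"
    using cont1_eps[OF V2_cont u0(2)] by auto
  obtain r9 where r9: "r9 > 0" "\<forall>q. norm (q - p) < r9 \<longrightarrow> \<bar>V q $2 / (V q $2 - U q $2) - V p $2 / (V p $2 - U p $2)\<bar> < \<delta>t"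
    using cont1_eps[OF ratio_cont dt(1)] by auto
  define r where "r = min rK (min r1 (min r2 (min r3 (min r4 (min r5 (min r6 (min r7 (min r8 r9))))))))"
  have rpos: "0 < r" unfolding r_def min_less_iff_conj using Hk(1) r1(1) r2(1) r3(1) r4(1) r5(1) r6(1) r7(1) r8(1) r9(1)
    by simp
  have rb0: "r \<le> rK" unfolding r_def by (rule min.cobounded1)
  have rb1: "r \<le> r1" unfolding r_def by (rule min.coboundedI2[OF min.cobounded1])
  have rb2: "r \<le> r2" unfolding r_def by (rule min.coboundedI2[OF min.coboundedI2[OF min.cobounded1]])
  have rb3: "r \<le> r3" unfolding r_def by (rule min.coboundedI2[OF min.coboundedI2[OF min.coboundedI2[OF min.cobounded1]]])
  have rb4: "r \<le> r4" unfolding r_def by (rule min.coboundedI2[OF min.coboundedI2[OF min.coboundedI2[OF min.coboundedI2[OF min.cobounded1]]]])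
  have rb5: "r \<le> r5" unfolding r_def by (rule min.coboundedI2[OF min.coboundedI2[OF min.coboundedI2[OF min.coboundedI2[OF min.coboundedI2[OF min.cobounded1]]]]])
  have rb6: "r \<le> r6" unfolding r_def by (rule min.coboundedI2[OF min.coboundedI2[OF min.coboundedI2[OF min.coboundedI2[OF min.coboundedI2[OF min.coboundedI2[OF min.cobounded1]]]]]])
  have rb7: "r \<le> r7" unfolding r_def by (rule min.coboundedI2[OF min.coboundedI2[OF min.coboundedI2[OF min.coboundedI2[OF min.coboundedI2[OF min.coboundedI2[OF min.coboundedI2[OF min.cobounded1]]]]]]])
  have rb8: "r \<le> r8" unfolding r_def by (rule min.coboundedI2[OF min.coboundedI2[OF min.coboundedI2[OF min.coboundedI2[OF min.coboundedI2[OF min.coboundedI2[OF min.coboundedI2[OF min.coboundedI2[OF min.cobounded1]]]]]]]])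
  have rb9: "r \<le> r9" unfolding r_def by (rule min.coboundedI2[OF min.coboundedI2[OF min.coboundedI2[OF min.coboundedI2[OF min.coboundedI2[OF min.coboundedI2[OF min.coboundedI2[OF min.coboundedI2[OF min.cobounded2]]]]]]]])
  note r = rpos rb0 rb1 rb2 rb3 rb4 rb5 rb6 rb7 rb8 rb9
  define Cy where "Cy = (\<bar>DD p ey\<bar> + 1) / \<bar>d\<bar>"
  define BU where "BU = \<bar>DU p E $2\<bar> + \<bar>DU p ey $2\<bar> + 1"
  define BV where "BV = \<bar>DV p E $2\<bar> + \<bar>DV p ey $2\<bar> + 1"
  define cw where "cw = (\<bar>U p $2\<bar> + \<bar>V p $2\<bar>)/2"
  define a where "a = min (r/8) (min (1/4) (if p$3 > 0 then p$3/4 else 1))"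
  define b where "b = min (r/8) (min (1/4) (a / (2 * (Cy + 1))))"
  have Cy: "Cy \<ge> 0" unfolding Cy_def by simp
  have a: "0 < a" "a \<le> r/8" "a \<le> 1/4" "p$3 > 0 \<longrightarrow> a \<le> p$3/4" unfolding a_def using r(1) by auto
  have b: "0 < b" "b \<le> r/8" "b \<le> 1/4" "b * (Cy + 1) \<le> a/2"
  proof -
    show "b \<le> r/8" unfolding b_def by (rule min.cobounded1)
    show "b \<le> 1/4" unfolding b_def by (rule min.coboundedI2[OF min.cobounded1])
    have "a / (2 * (Cy + 1)) > 0" using a(1) Cy by simp
    then show "0 < b" unfolding b_def min_less_iff_conj using r(1) by simp
    have "b \<le> a / (2 * (Cy + 1))" unfolding b_def by (rule min.coboundedI2[OF min.cobounded2])
    moreover have "0 \<le> Cy + 1" using Cy by simp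
    ultimately have "b * (Cy + 1) \<le> a / (2 * (Cy + 1)) * (Cy + 1)" by (rule mult_right_mono)
    also have "\<dots> = a/2" using Cy by (simp add: field_simps)
    finally show "b * (Cy + 1) \<le> a/2" .
  qed
  have rDD1: "\<forall>q h. norm (q - p) < r \<longrightarrow> norm (h - E) < r \<longrightarrow> \<bar>DD q h - d\<bar> < \<bar>d\<bar>/4"
    using r1(2) r(3) dd by auto
  have rDD2: "\<forall>q h. norm (q - p) < r \<longrightarrow> norm (h - ey) < r \<longrightarrow> \<bar>DD q h\<bar> \<le> Cy * \<bar>d\<bar>"
  proof (intro allI impI)
    fix q h assume "norm (q - p) < r" "norm (h - ey) < r"
    then have "\<bar>DD q h - DD p ey\<bar> < 1" using r2(2) r(4) by auto
    moreover have "Cy * \<bar>d\<bar> = \<bar>DD p ey\<bar> + 1" unfolding Cy_def using dnz by simp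
    ultimately show "\<bar>DD q h\<bar> \<le> Cy * \<bar>d\<bar>" by linarith
  qed
  have rU: "\<forall>q h. norm (q - p) < r \<longrightarrow> (norm (h - E) < r \<or> norm (h - ey) < r) \<longrightarrow> \<bar>DU q h $2\<bar> \<le> BU"
  proof (intro allI impI)
    fix q h assume q: "norm (q - p) < r" and h: "norm (h - E) < r \<or> norm (h - ey) < r"
    then show "\<bar>DU q h $2\<bar> \<le> BU"
    proof (elim disjE)
      assume "norm (h - E) < r"
      then have "\<bar>DU q h $2 - DU p E $2\<bar> < 1" using r3(2) r(5) q by auto
      then show ?thesis unfolding BU_def by linarith
    next
      assume "norm (h - ey) < r"
      then have "\<bar>DU q h $2 - DU p ey $2\<bar> < 1" using r4(2) r(6) q by auto
      then show ?thesis unfolding BU_def by linarith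
    qed
  qed
  have rV: "\<forall>q h. norm (q - p) < r \<longrightarrow> (norm (h - E) < r \<or> norm (h - ey) < r) \<longrightarrow> \<bar>DV q h $2\<bar> \<le> BV"
  proof (intro allI impI)
    fix q h assume q: "norm (q - p) < r" and h: "norm (h - E) < r \<or> norm (h - ey) < r"
    then show "\<bar>DV q h $2\<bar> \<le> BV"
    proof (elim disjE)
      assume "norm (h - E) < r"
      then have "\<bar>DV q h $2 - DV p E $2\<bar> < 1" using r5(2) r(7) q by auto
      then show ?thesis unfolding BV_def by linarith
    next
      assume "norm (h - ey) < r"
      then have "\<bar>DV q h $2 - DV p ey $2\<bar> < 1" using r6(2) r(8) q by auto
      then show ?thesis unfolding BV_def by linarith
    qed
  qed
  have rsgn: "\<forall>q. norm (q - p) < r \<longrightarrow> \<bar>U q $2 - U p $2\<bar> < \<bar>U p $2\<bar>/2 \<and> \<bar>V q $2 - V p $2\<bar> < \<bar>V p $2\<bar>/2"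
    using r7(2) r8(2) r(9,10) by auto
  have rrat: "\<forall>q. norm (q - p) < r \<longrightarrow> \<bar>V q $2 / (V q $2 - U q $2) - ts\<bar> < \<delta>t"
    using r9(2) r(11) unfolding ts_def by auto
  interpret B: boxs U V DU DV p \<phi> d rK Mb r a b Cy BU BV cw \<delta>t c\<phi>
    by unfold_locales (fact Hk dt cphi r rDD1 rDD2 Cy rU rV rsgn rrat cw_def a b)+
  show ?thesis using B.box_main B.Vn_open B.p_Vn by blast
qed

end

lemma Dcurve_deriv:
  "(Dcurve has_derivative (\<lambda>s. s *\<^sub>R (vector [-sin t, 0, cos t] :: real^3))) (at t)"
proof -
  have "((\<lambda>t. vector [cos t, 0, sin t] :: real^3) has_derivative
        (\<lambda>s. vector [s * (- sin t), 0, s * cos t])) (at t)"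
    by (rule has_derivative_vector3) (auto intro!: derivative_eq_intros simp: has_field_derivative_def)
  moreover have "(\<lambda>s. vector [s * (- sin t), 0, s * cos t] :: real^3) = (\<lambda>s. s *\<^sub>R vector [-sin t, 0, cos t])"
    by (rule ext) (simp add: vec3_eq)
  ultimately show ?thesis unfolding Dcurve_def[abs_def] by simp
qed

theorem mainTheorem2:
  fixes m :: nat and X Y :: pfield and p :: "real ^ 3"
  assumes "m \<ge> 1"
    and "(X, Y) \<in> Omega m"
    and "filippov_hyperbolic_singular (pcomp m X) (pcomp m Y) p"
    and "p \<in> upper_hemi"
  shows "\<forall>\<phi>. transition_function \<phi> \<longrightarrow>
           (\<exists>V \<epsilon>0. openin (top_of_set upper_hemi) V \<and> p \<in> V \<and> \<epsilon>0 > 0 \<and>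
              (\<forall>\<epsilon>. 0 < \<epsilon> \<and> \<epsilon> \<le> \<epsilon>0 \<longrightarrow>
                 (\<exists>!q. q \<in> V \<and> sing_point_S2 (reg_comp m \<phi> \<epsilon> (X, Y)) q) \<and>
                 (\<forall>q. q \<in> V \<and> sing_point_S2 (reg_comp m \<phi> \<epsilon> (X, Y)) q \<longrightarrow>
                    hyperbolic_saddle (reg_comp m \<phi> \<epsilon> (X, Y)) q \<or>
                    hyperbolic_node (reg_comp m \<phi> \<epsilon> (X, Y)) q)))"
proof (intro allI impI)
  fix \<phi> :: "real \<Rightarrow> real" assume tf: "transition_function \<phi>"
  interpret T: twofield "pcomp m X" "pcomp m Y" "dpcomp m X" "dpcomp m Y"
  proof
    show "\<And>q. (pcomp m X has_derivative dpcomp m X q) (at q)" by (rule pcomp_deriv)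
    show "\<And>q. (pcomp m Y has_derivative dpcomp m Y q) (at q)" by (rule pcomp_deriv)
    show "continuous_on UNIV (\<lambda>z. dpcomp m X (fst z) (snd z))" by (rule dpcomp_cont)
    show "continuous_on UNIV (\<lambda>z. dpcomp m Y (fst z) (snd z))" by (rule dpcomp_cont)
    show "\<And>q. q \<in> sphere2 \<Longrightarrow> q \<bullet> pcomp m X q = 0" by (rule pcomp_tangent) (simp add: sphere2_def)
    show "\<And>q. q \<in> sphere2 \<Longrightarrow> q \<bullet> pcomp m Y q = 0" by (rule pcomp_tangent) (simp add: sphere2_def)
    show "\<And>q. q $ 3 = 0 \<Longrightarrow> pcomp m X q $ 3 = 0" by (rule pcomp_equator)
    show "\<And>q. q $ 3 = 0 \<Longrightarrow> pcomp m Y q $ 3 = 0" by (rule pcomp_equator)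
  qed
  from assms(3) obtain \<theta>0 d where
    pS: "p \<in> sphere2" and p2: "p$2 = 0" and sg0: "Lie_f (pcomp m X) p * Lie_f (pcomp m Y) p < 0"
    and det0: "detUV (pcomp m X) (pcomp m Y) p = 0" and pc: "p = Dcurve \<theta>0"
    and dd0: "((\<lambda>\<theta>. detUV (pcomp m X) (pcomp m Y) (Dcurve \<theta>)) has_real_derivative d) (at \<theta>0)"
    and dnz: "d \<noteq> 0"
    unfolding filippov_hyperbolic_singular_def filippov_singular_def by blast
  have pp: "p \<bullet> p = 1" using pS by (simp add: sphere2_def norm_eq_1)
  interpret A: atp "pcomp m X" "pcomp m Y" "dpcomp m X" "dpcomp m Y" p
    by unfold_locales (fact pp p2)+
  have Deq: "detUV (pcomp m X) (pcomp m Y) = T.D" by (rule ext) (simp add: detUV_def T.D_def tp_def)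
  have p13: "p$1 = cos \<theta>0" "p$3 = sin \<theta>0" using pc by (simp_all add: Dcurve_def)
  have Ev: "(vector [-sin \<theta>0, 0, cos \<theta>0] :: real^3) = A.E" by (simp add: A.E_def p13)
  have "((\<lambda>\<theta>. T.D (Dcurve \<theta>)) has_derivative (\<lambda>s. T.DD (Dcurve \<theta>0) (s *\<^sub>R A.E))) (at \<theta>0)"
    using has_derivative_compose[OF Dcurve_deriv[of \<theta>0] T.D_deriv] unfolding Ev .
  moreover have "linear (T.DD p)" using T.D_deriv has_derivative_linear by blast
  ultimately have "((\<lambda>\<theta>. T.D (Dcurve \<theta>)) has_real_derivative T.DD p A.E) (at \<theta>0)"
    unfolding has_field_derivative_def using pc linear_scale[of "T.DD p"]
    by (simp add: mult_commute_abs)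
  then have dd: "T.DD p A.E = d" using dd0 unfolding Deq by (rule DERIV_unique)
  have p3: "p$3 \<ge> 0" using assms(4) by (simp add: upper_hemi_def)
  have sg: "pcomp m X p $2 * pcomp m Y p $2 < 0" using sg0 by (simp add: Lie_f_def)
  have Dp: "T.D p = 0" using det0 Deq by simp
  interpret M: msetting "pcomp m X" "pcomp m Y" "dpcomp m X" "dpcomp m Y" p \<phi> d
    by unfold_locales (fact tf sg Dp dd dnz p3)+
  have W: "\<And>\<epsilon>. reg_comp m \<phi> \<epsilon> (X, Y) = M.Wf \<epsilon>"
    by (rule ext) (simp add: reg_comp_def M.Wf_def)
  show "\<exists>V \<epsilon>0. openin (top_of_set upper_hemi) V \<and> p \<in> V \<and> \<epsilon>0 > 0 \<and>
              (\<forall>\<epsilon>. 0 < \<epsilon> \<and> \<epsilon> \<le> \<epsilon>0 \<longrightarrow>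
                 (\<exists>!q. q \<in> V \<and> sing_point_S2 (reg_comp m \<phi> \<epsilon> (X, Y)) q) \<and>
                 (\<forall>q. q \<in> V \<and> sing_point_S2 (reg_comp m \<phi> \<epsilon> (X, Y)) q \<longrightarrow>
                    hyperbolic_saddle (reg_comp m \<phi> \<epsilon> (X, Y)) q \<or>
                    hyperbolic_node (reg_comp m \<phi> \<epsilon> (X, Y)) q))"
    unfolding W by (rule M.local_main)
qed

end
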